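(* $\kappa_4(S_4^2)\geqslant 10$ and $\kappa_5(S_4^2)\geqslant 12$.
   Context: For an integer $\ell\geqslant 2$, $\kappa_\ell(G)$ is the minimum number of vertices whose removal from $G$ results in a disconnected graph with at least $\ell$ components or a graph with fewer than $\ell$ vertices. $S_4^2$ is the split-star: vertex set all permutations $p=p_1p_2p_3p_4$ of $\{1,2,3,4\}$, with $p$ adjacent to $p\mathrm{g}_{12}$ (swap symbols at positions 1 and 2) and to $p\mathrm{g}_i^+$, $p\mathrm{g}_i^-$ for $i\in\{3,4\}$, where $p\mathrm{g}_i^+$ places $p_i,p_1,p_2$ at positions $1,2,i$ and $p\mathrm{g}_i^-$ places $p_2,p_i,p_1$ at positions $1,2,i$ (other positions unchanged). *)

theory Defs
  imports Main
begin

text \<open>A graph is given by a vertex set V and a (symmetric) adjacency relation E.\<close>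

definition induced_edges :: "'a set \<Rightarrow> ('a \<Rightarrow> 'a \<Rightarrow> bool) \<Rightarrow> ('a \<times> 'a) set" where
  "induced_edges S E = {(x, y). x \<in> S \<and> y \<in> S \<and> E x y}"

definition components :: "'a set \<Rightarrow> ('a \<Rightarrow> 'a \<Rightarrow> bool) \<Rightarrow> 'a set set" where
  "components S E = (\<lambda>v. {w \<in> S. (v, w) \<in> (induced_edges S E)\<^sup>*}) ` S"

definition gen_conn :: "nat \<Rightarrow> 'a set \<Rightarrow> ('a \<Rightarrow> 'a \<Rightarrow> bool) \<Rightarrow> nat" where
  "gen_conn l V E = Inf {card F | F. F \<subseteq> V \<and>
      ((card (components (V - F) E) \<ge> 2 \<and> card (components (V - F) E) \<ge> l)
       \<or> card (V - F) < l)}"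

text \<open>Permutations p = p1 p2 p3 p4 are lists of length 4; position k (1-based) is index k-1.\<close>

definition S42_V :: "nat list set" where
  "S42_V = {p. length p = 4 \<and> distinct p \<and> set p = {1, 2, 3, 4}}"

definition g12 :: "nat list \<Rightarrow> nat list" where
  "g12 p = p[0 := p ! 1, 1 := p ! 0]"

definition gplus :: "nat \<Rightarrow> nat list \<Rightarrow> nat list" where
  "gplus i p = p[0 := p ! (i - 1), 1 := p ! 0, i - 1 := p ! 1]"

definition gminus :: "nat \<Rightarrow> nat list \<Rightarrow> nat list" where
  "gminus i p = p[0 := p ! 1, 1 := p ! (i - 1), i - 1 := p ! 0]"

definition S42_E :: "nat list \<Rightarrow> nat list \<Rightarrow> bool" where
  "S42_E p q \<longleftrightarrow> q = g12 p \<or> (\<exists>i \<in> {3, 4}. q = gplus i p \<or> q = gminus i p)"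

end

theory Submission
  imports Defs
begin

section \<open>Generic facts about components\<close>

locale symg = fixes E :: "'a \<Rightarrow> 'a \<Rightarrow> bool" assumes symE: "\<And>u v. E u v \<Longrightarrow> E v u"
begin

lemma sym_ie: "sym (induced_edges X E)"
  by (auto simp: sym_def induced_edges_def intro: symE)

lemma rt_sym: "(u, v) \<in> (induced_edges X E)\<^sup>* \<Longrightarrow> (v, u) \<in> (induced_edges X E)\<^sup>*"
  using sym_rtrancl[OF sym_ie] by (auto simp: sym_def)

lemma comp_sub: "C \<in> components X E \<Longrightarrow> C \<subseteq> X"
  by (auto simp: components_def)

lemma comp_ne: "C \<in> components X E \<Longrightarrow> C \<noteq> {}"
  by (auto simp: components_def)

lemma comp_eq:
  assumes "C \<in> components X E" "x \<in> C"
  shows "C = {w \<in> X. (x, w) \<in> (induced_edges X E)\<^sup>*}"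
proof -
  obtain v where v: "v \<in> X" "C = {w \<in> X. (v, w) \<in> (induced_edges X E)\<^sup>*}"
    using assms(1) by (auto simp: components_def)
  then have vx: "(v, x) \<in> (induced_edges X E)\<^sup>*" using assms(2) by auto
  then have xv: "(x, v) \<in> (induced_edges X E)\<^sup>*" by (rule rt_sym)
  show ?thesis using v vx xv by (auto intro: rtrancl_trans)
qed

lemma comp_closed:
  assumes "C \<in> components X E" "u \<in> C" "v \<in> X" "E u v"
  shows "v \<in> C"
proof -
  have "C = {w \<in> X. (u, w) \<in> (induced_edges X E)\<^sup>*}" using comp_eq assms by blast
  moreover have "(u, v) \<in> induced_edges X E" using assms comp_sub by (auto simp: induced_edges_def)
  ultimately show ?thesis using assms by auto
qed

lemma comp_disj:
  assumes "C \<in> components X E" "D \<in> components X E" "x \<in> C" "x \<in> D"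
  shows "C = D"
  using comp_eq[OF assms(1,3)] comp_eq[OF assms(2,4)] by simp

lemma comp_leaf:
  assumes "C \<in> components X E" "x \<in> S" "S \<subseteq> C" "\<And>s v. s \<in> S \<Longrightarrow> v \<in> X \<Longrightarrow> E s v \<Longrightarrow> v \<in> S"
  shows "C = S"
proof -
  have x: "x \<in> C" using assms by auto
  have "w \<in> S" if "(x, w) \<in> (induced_edges X E)\<^sup>*" for w
    using that
  proof (induction rule: rtrancl_induct)
    case base then show ?case using assms(2) .
  next
    case (step y z) then show ?case using assms(4) by (auto simp: induced_edges_def)
  qed
  then show ?thesis using comp_eq[OF assms(1) x] assms(3) by auto
qed

lemma comp_remove:
  assumes C: "C \<in> components X E" and D: "D \<in> components X E" and ne: "D \<noteq> C"
  shows "D \<in> components (X - C) E"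
proof -
  obtain d where d: "d \<in> D" using comp_ne[OF D] by auto
  have dC: "d \<notin> C" using comp_disj[OF C D] d ne by auto
  have dX: "d \<in> X" using comp_sub[OF D] d by auto
  have Deq: "D = {w \<in> X. (d, w) \<in> (induced_edges X E)\<^sup>*}" using comp_eq[OF D d] .
  have A: "w \<notin> C \<and> (d, w) \<in> (induced_edges (X - C) E)\<^sup>*" if "(d, w) \<in> (induced_edges X E)\<^sup>*" for w
    using that
  proof (induction rule: rtrancl_induct)
    case base then show ?case using dC by auto
  next
    case (step y z)
    then have yz: "y \<in> X" "z \<in> X" "E y z" by (auto simp: induced_edges_def)
    have zC: "z \<notin> C"
    proof
      assume "z \<in> C"
      then have "y \<in> C" using comp_closed[OF C _ yz(1) symE[OF yz(3)]] by auto
      then show False using step by auto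
    qed
    then have "(y, z) \<in> induced_edges (X - C) E" using yz step by (auto simp: induced_edges_def)
    then show ?case using step zC by (auto intro: rtrancl_into_rtrancl)
  qed
  have B: "(d, w) \<in> (induced_edges X E)\<^sup>*" if "(d, w) \<in> (induced_edges (X - C) E)\<^sup>*" for w
  proof -
    have "induced_edges (X - C) E \<subseteq> induced_edges X E" by (auto simp: induced_edges_def)
    then show ?thesis using that rtrancl_mono by blast
  qed
  have "D = {w \<in> X - C. (d, w) \<in> (induced_edges (X - C) E)\<^sup>*}"
    using Deq A B by blast
  moreover have "d \<in> X - C" using dX dC by auto
  ultimately show ?thesis unfolding components_def by blast
qed

lemma comps_card_bound:
  assumes fin: "finite X" and cs: "cs \<subseteq> components X E" and C: "\<And>D. D \<in> cs \<Longrightarrow> m \<le> card D"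
  shows "card cs * m \<le> card X"
proof -
  have pw: "pairwise disjnt cs"
  proof (rule pairwiseI)
    fix P Q assume "P \<in> cs" "Q \<in> cs" "P \<noteq> Q"
    show "disjnt P Q" unfolding disjnt_def
    proof (rule equals0I)
      fix x assume "x \<in> P \<inter> Q"
      then have "P = Q" using comp_disj[of P X Q x] cs \<open>P \<in> cs\<close> \<open>Q \<in> cs\<close> by auto
      then show False using \<open>P \<noteq> Q\<close> by simp
    qed
  qed
  have fins: "finite A" if "A \<in> cs" for A
    by (rule finite_subset[OF comp_sub[OF subsetD[OF cs that]] fin])
  have "of_nat (card cs) * m \<le> sum card cs" by (rule sum_bounded_below) (rule C)
  then have "card cs * m \<le> sum card cs" by simp
  also have "\<dots> = card (\<Union>cs)" using card_Union_disjoint[OF pw fins] by simp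
  also have "\<dots> \<le> card X"
  proof (rule card_mono[OF fin])
    show "\<Union>cs \<subseteq> X" using cs comp_sub by blast
  qed
  finally show ?thesis .
qed

end

lemma comps_image:
  assumes inj: "inj h" and hom: "\<And>u v. E (h u) (h v) = A u v"
  shows "components (h ` X) E = (image h) ` components X A"
proof -
  have fwd: "(h u, h w) \<in> (induced_edges (h ` X) E)\<^sup>*" if "(u, w) \<in> (induced_edges X A)\<^sup>*" for u w
    using that
  proof (induction rule: rtrancl_induct)
    case base then show ?case by simp
  next
    case (step y z)
    then have "(h y, h z) \<in> induced_edges (h ` X) E" using hom by (auto simp: induced_edges_def)
    then show ?case using step by (auto intro: rtrancl_into_rtrancl)
  qed
  have bwd: "\<exists>w. z = h w \<and> (u, w) \<in> (induced_edges X A)\<^sup>*" if "(h u, z) \<in> (induced_edges (h ` X) E)\<^sup>*" for u z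
    using that
  proof (induction rule: rtrancl_induct)
    case base then show ?case by auto
  next
    case (step y z)
    then obtain w where w: "y = h w" "(u, w) \<in> (induced_edges X A)\<^sup>*" by auto
    from step(2) obtain z' where z': "z = h z'" "z' \<in> X" "w \<in> X" "A w z'"
      using w hom inj by (auto simp: induced_edges_def inj_eq)
    then have "(w, z') \<in> induced_edges X A" by (auto simp: induced_edges_def)
    then show ?case using w z' by (auto intro: rtrancl_into_rtrancl)
  qed
  have key: "{w \<in> h ` X. (h v, w) \<in> (induced_edges (h ` X) E)\<^sup>*} = h ` {w \<in> X. (v, w) \<in> (induced_edges X A)\<^sup>*}"
    if "v \<in> X" for v
  proof
    show "{w \<in> h ` X. (h v, w) \<in> (induced_edges (h ` X) E)\<^sup>*} \<subseteq> h ` {w \<in> X. (v, w) \<in> (induced_edges X A)\<^sup>*}"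
    proof
      fix z assume "z \<in> {w \<in> h ` X. (h v, w) \<in> (induced_edges (h ` X) E)\<^sup>*}"
      then obtain w where "z = h w" "(v, w) \<in> (induced_edges X A)\<^sup>*" "z \<in> h ` X" using bwd by blast
      then show "z \<in> h ` {w \<in> X. (v, w) \<in> (induced_edges X A)\<^sup>*}" using inj by (auto simp: inj_eq)
    qed
    show "h ` {w \<in> X. (v, w) \<in> (induced_edges X A)\<^sup>*} \<subseteq> {w \<in> h ` X. (h v, w) \<in> (induced_edges (h ` X) E)\<^sup>*}"
      using fwd by auto
  qed
  have "components (h ` X) E = (\<lambda>v. {w \<in> h ` X. (h v, w) \<in> (induced_edges (h ` X) E)\<^sup>*}) ` X"
    unfolding components_def image_image ..
  also have "\<dots> = (\<lambda>v. h ` {w \<in> X. (v, w) \<in> (induced_edges X A)\<^sup>*}) ` X"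
    using key by (rule image_cong[OF refl])
  also have "\<dots> = image h ` components X A" unfolding components_def image_image ..
  finally show ?thesis .
qed

lemma card_comps_image:
  assumes inj: "inj h" and hom: "\<And>u v. E (h u) (h v) = A u v"
  shows "card (components (h ` X) E) = card (components X A)"
proof -
  have "inj_on (image h) (components X A)"
    by (rule inj_onI) (use inj in \<open>simp add: inj_image_eq_iff\<close>)
  then have "card (image h ` components X A) = card (components X A)" by (rule card_image)
  then show ?thesis using comps_image[of h E A X, OF inj hom] by simp
qed



section \<open>The graph on an enumerated vertex type\<close>

datatype vx = V0 | V1 | V2 | V3 | V4 | V5 | V6 | V7 | V8 | V9 | V10 | V11 | V12 | V13 | V14 | V15 | V16 | V17 | V18 | V19 | V20 | V21 | V22 | V23

definition allv :: "vx list" where "allv = [V0,V1,V2,V3,V4,V5,V6,V7,V8,V9,V10,V11,V12,V13,V14,V15,V16,V17,V18,V19,V20,V21,V22,V23]"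

lemma in_allv: "x \<in> set allv"
  by (cases x) (simp_all add: allv_def)

lemma UNIV_vx: "(UNIV :: vx set) = set allv"
  using in_allv by auto

lemma distinct_allv: "distinct allv"
  by (simp add: allv_def)

instance vx :: finite
  by standard (simp add: UNIV_vx)

lemma card_UNIV_vx: "card (UNIV :: vx set) = 24"
  unfolding UNIV_vx using distinct_card[OF distinct_allv] by (simp add: allv_def)

fun nbr :: "vx \<Rightarrow> vx list" where
"nbr V0 = [V6,V8,V11,V12,V19]"
| "nbr V1 = [V7,V9,V10,V13,V18]"
| "nbr V2 = [V6,V12,V14,V17,V18]"
| "nbr V3 = [V7,V13,V15,V16,V19]"
| "nbr V4 = [V7,V12,V18,V20,V23]"
| "nbr V5 = [V6,V13,V19,V21,V22]"
| "nbr V6 = [V0,V2,V5,V14,V21]"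
| "nbr V7 = [V1,V3,V4,V15,V20]"
| "nbr V8 = [V0,V12,V14,V16,V20]"
| "nbr V9 = [V1,V13,V15,V17,V21]"
| "nbr V10 = [V1,V14,V18,V20,V22]"
| "nbr V11 = [V0,V15,V19,V21,V23]"
| "nbr V12 = [V0,V2,V4,V8,V23]"
| "nbr V13 = [V1,V3,V5,V9,V22]"
| "nbr V14 = [V2,V6,V8,V10,V22]"
| "nbr V15 = [V3,V7,V9,V11,V23]"
| "nbr V16 = [V3,V8,V19,V20,V22]"
| "nbr V17 = [V2,V9,V18,V21,V23]"
| "nbr V18 = [V1,V2,V4,V10,V17]"
| "nbr V19 = [V0,V3,V5,V11,V16]"
| "nbr V20 = [V4,V7,V8,V10,V16]"
| "nbr V21 = [V5,V6,V9,V11,V17]"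
| "nbr V22 = [V5,V10,V13,V14,V16]"
| "nbr V23 = [V4,V11,V12,V15,V17]"

definition adjv :: "vx \<Rightarrow> vx \<Rightarrow> bool" where
  "adjv u v \<longleftrightarrow> v \<in> set (nbr u)"

lemma adjv_sym_all: "\<forall>v \<in> set (nbr u). u \<in> set (nbr v)"
  by (cases u) simp_all

lemma adjv_sym: "adjv u v \<Longrightarrow> adjv v u"
  using adjv_sym_all[of u] by (auto simp: adjv_def)

interpretation G: symg adjv
  by unfold_locales (rule adjv_sym)

section \<open>Search states\<close>

datatype sta = Out | InF | InS | Fr | Lo

datatype stt = St sta sta sta sta sta sta sta sta sta sta sta sta sta sta sta sta sta sta sta sta sta sta sta sta

fun get :: "vx \<Rightarrow> stt \<Rightarrow> sta" where
"get V0 (St a0 a1 a2 a3 a4 a5 a6 a7 a8 a9 a10 a11 a12 a13 a14 a15 a16 a17 a18 a19 a20 a21 a22 a23) = a0"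
| "get V1 (St a0 a1 a2 a3 a4 a5 a6 a7 a8 a9 a10 a11 a12 a13 a14 a15 a16 a17 a18 a19 a20 a21 a22 a23) = a1"
| "get V2 (St a0 a1 a2 a3 a4 a5 a6 a7 a8 a9 a10 a11 a12 a13 a14 a15 a16 a17 a18 a19 a20 a21 a22 a23) = a2"
| "get V3 (St a0 a1 a2 a3 a4 a5 a6 a7 a8 a9 a10 a11 a12 a13 a14 a15 a16 a17 a18 a19 a20 a21 a22 a23) = a3"
| "get V4 (St a0 a1 a2 a3 a4 a5 a6 a7 a8 a9 a10 a11 a12 a13 a14 a15 a16 a17 a18 a19 a20 a21 a22 a23) = a4"
| "get V5 (St a0 a1 a2 a3 a4 a5 a6 a7 a8 a9 a10 a11 a12 a13 a14 a15 a16 a17 a18 a19 a20 a21 a22 a23) = a5"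
| "get V6 (St a0 a1 a2 a3 a4 a5 a6 a7 a8 a9 a10 a11 a12 a13 a14 a15 a16 a17 a18 a19 a20 a21 a22 a23) = a6"
| "get V7 (St a0 a1 a2 a3 a4 a5 a6 a7 a8 a9 a10 a11 a12 a13 a14 a15 a16 a17 a18 a19 a20 a21 a22 a23) = a7"
| "get V8 (St a0 a1 a2 a3 a4 a5 a6 a7 a8 a9 a10 a11 a12 a13 a14 a15 a16 a17 a18 a19 a20 a21 a22 a23) = a8"
| "get V9 (St a0 a1 a2 a3 a4 a5 a6 a7 a8 a9 a10 a11 a12 a13 a14 a15 a16 a17 a18 a19 a20 a21 a22 a23) = a9"
| "get V10 (St a0 a1 a2 a3 a4 a5 a6 a7 a8 a9 a10 a11 a12 a13 a14 a15 a16 a17 a18 a19 a20 a21 a22 a23) = a10"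
| "get V11 (St a0 a1 a2 a3 a4 a5 a6 a7 a8 a9 a10 a11 a12 a13 a14 a15 a16 a17 a18 a19 a20 a21 a22 a23) = a11"
| "get V12 (St a0 a1 a2 a3 a4 a5 a6 a7 a8 a9 a10 a11 a12 a13 a14 a15 a16 a17 a18 a19 a20 a21 a22 a23) = a12"
| "get V13 (St a0 a1 a2 a3 a4 a5 a6 a7 a8 a9 a10 a11 a12 a13 a14 a15 a16 a17 a18 a19 a20 a21 a22 a23) = a13"
| "get V14 (St a0 a1 a2 a3 a4 a5 a6 a7 a8 a9 a10 a11 a12 a13 a14 a15 a16 a17 a18 a19 a20 a21 a22 a23) = a14"
| "get V15 (St a0 a1 a2 a3 a4 a5 a6 a7 a8 a9 a10 a11 a12 a13 a14 a15 a16 a17 a18 a19 a20 a21 a22 a23) = a15"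
| "get V16 (St a0 a1 a2 a3 a4 a5 a6 a7 a8 a9 a10 a11 a12 a13 a14 a15 a16 a17 a18 a19 a20 a21 a22 a23) = a16"
| "get V17 (St a0 a1 a2 a3 a4 a5 a6 a7 a8 a9 a10 a11 a12 a13 a14 a15 a16 a17 a18 a19 a20 a21 a22 a23) = a17"
| "get V18 (St a0 a1 a2 a3 a4 a5 a6 a7 a8 a9 a10 a11 a12 a13 a14 a15 a16 a17 a18 a19 a20 a21 a22 a23) = a18"
| "get V19 (St a0 a1 a2 a3 a4 a5 a6 a7 a8 a9 a10 a11 a12 a13 a14 a15 a16 a17 a18 a19 a20 a21 a22 a23) = a19"
| "get V20 (St a0 a1 a2 a3 a4 a5 a6 a7 a8 a9 a10 a11 a12 a13 a14 a15 a16 a17 a18 a19 a20 a21 a22 a23) = a20"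
| "get V21 (St a0 a1 a2 a3 a4 a5 a6 a7 a8 a9 a10 a11 a12 a13 a14 a15 a16 a17 a18 a19 a20 a21 a22 a23) = a21"
| "get V22 (St a0 a1 a2 a3 a4 a5 a6 a7 a8 a9 a10 a11 a12 a13 a14 a15 a16 a17 a18 a19 a20 a21 a22 a23) = a22"
| "get V23 (St a0 a1 a2 a3 a4 a5 a6 a7 a8 a9 a10 a11 a12 a13 a14 a15 a16 a17 a18 a19 a20 a21 a22 a23) = a23"

fun upd :: "vx \<Rightarrow> sta \<Rightarrow> stt \<Rightarrow> stt" where
"upd V0 z (St a0 a1 a2 a3 a4 a5 a6 a7 a8 a9 a10 a11 a12 a13 a14 a15 a16 a17 a18 a19 a20 a21 a22 a23) = St z a1 a2 a3 a4 a5 a6 a7 a8 a9 a10 a11 a12 a13 a14 a15 a16 a17 a18 a19 a20 a21 a22 a23"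
| "upd V1 z (St a0 a1 a2 a3 a4 a5 a6 a7 a8 a9 a10 a11 a12 a13 a14 a15 a16 a17 a18 a19 a20 a21 a22 a23) = St a0 z a2 a3 a4 a5 a6 a7 a8 a9 a10 a11 a12 a13 a14 a15 a16 a17 a18 a19 a20 a21 a22 a23"
| "upd V2 z (St a0 a1 a2 a3 a4 a5 a6 a7 a8 a9 a10 a11 a12 a13 a14 a15 a16 a17 a18 a19 a20 a21 a22 a23) = St a0 a1 z a3 a4 a5 a6 a7 a8 a9 a10 a11 a12 a13 a14 a15 a16 a17 a18 a19 a20 a21 a22 a23"
| "upd V3 z (St a0 a1 a2 a3 a4 a5 a6 a7 a8 a9 a10 a11 a12 a13 a14 a15 a16 a17 a18 a19 a20 a21 a22 a23) = St a0 a1 a2 z a4 a5 a6 a7 a8 a9 a10 a11 a12 a13 a14 a15 a16 a17 a18 a19 a20 a21 a22 a23"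
| "upd V4 z (St a0 a1 a2 a3 a4 a5 a6 a7 a8 a9 a10 a11 a12 a13 a14 a15 a16 a17 a18 a19 a20 a21 a22 a23) = St a0 a1 a2 a3 z a5 a6 a7 a8 a9 a10 a11 a12 a13 a14 a15 a16 a17 a18 a19 a20 a21 a22 a23"
| "upd V5 z (St a0 a1 a2 a3 a4 a5 a6 a7 a8 a9 a10 a11 a12 a13 a14 a15 a16 a17 a18 a19 a20 a21 a22 a23) = St a0 a1 a2 a3 a4 z a6 a7 a8 a9 a10 a11 a12 a13 a14 a15 a16 a17 a18 a19 a20 a21 a22 a23"
| "upd V6 z (St a0 a1 a2 a3 a4 a5 a6 a7 a8 a9 a10 a11 a12 a13 a14 a15 a16 a17 a18 a19 a20 a21 a22 a23) = St a0 a1 a2 a3 a4 a5 z a7 a8 a9 a10 a11 a12 a13 a14 a15 a16 a17 a18 a19 a20 a21 a22 a23"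
| "upd V7 z (St a0 a1 a2 a3 a4 a5 a6 a7 a8 a9 a10 a11 a12 a13 a14 a15 a16 a17 a18 a19 a20 a21 a22 a23) = St a0 a1 a2 a3 a4 a5 a6 z a8 a9 a10 a11 a12 a13 a14 a15 a16 a17 a18 a19 a20 a21 a22 a23"
| "upd V8 z (St a0 a1 a2 a3 a4 a5 a6 a7 a8 a9 a10 a11 a12 a13 a14 a15 a16 a17 a18 a19 a20 a21 a22 a23) = St a0 a1 a2 a3 a4 a5 a6 a7 z a9 a10 a11 a12 a13 a14 a15 a16 a17 a18 a19 a20 a21 a22 a23"
| "upd V9 z (St a0 a1 a2 a3 a4 a5 a6 a7 a8 a9 a10 a11 a12 a13 a14 a15 a16 a17 a18 a19 a20 a21 a22 a23) = St a0 a1 a2 a3 a4 a5 a6 a7 a8 z a10 a11 a12 a13 a14 a15 a16 a17 a18 a19 a20 a21 a22 a23"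
| "upd V10 z (St a0 a1 a2 a3 a4 a5 a6 a7 a8 a9 a10 a11 a12 a13 a14 a15 a16 a17 a18 a19 a20 a21 a22 a23) = St a0 a1 a2 a3 a4 a5 a6 a7 a8 a9 z a11 a12 a13 a14 a15 a16 a17 a18 a19 a20 a21 a22 a23"
| "upd V11 z (St a0 a1 a2 a3 a4 a5 a6 a7 a8 a9 a10 a11 a12 a13 a14 a15 a16 a17 a18 a19 a20 a21 a22 a23) = St a0 a1 a2 a3 a4 a5 a6 a7 a8 a9 a10 z a12 a13 a14 a15 a16 a17 a18 a19 a20 a21 a22 a23"
| "upd V12 z (St a0 a1 a2 a3 a4 a5 a6 a7 a8 a9 a10 a11 a12 a13 a14 a15 a16 a17 a18 a19 a20 a21 a22 a23) = St a0 a1 a2 a3 a4 a5 a6 a7 a8 a9 a10 a11 z a13 a14 a15 a16 a17 a18 a19 a20 a21 a22 a23"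
| "upd V13 z (St a0 a1 a2 a3 a4 a5 a6 a7 a8 a9 a10 a11 a12 a13 a14 a15 a16 a17 a18 a19 a20 a21 a22 a23) = St a0 a1 a2 a3 a4 a5 a6 a7 a8 a9 a10 a11 a12 z a14 a15 a16 a17 a18 a19 a20 a21 a22 a23"
| "upd V14 z (St a0 a1 a2 a3 a4 a5 a6 a7 a8 a9 a10 a11 a12 a13 a14 a15 a16 a17 a18 a19 a20 a21 a22 a23) = St a0 a1 a2 a3 a4 a5 a6 a7 a8 a9 a10 a11 a12 a13 z a15 a16 a17 a18 a19 a20 a21 a22 a23"
| "upd V15 z (St a0 a1 a2 a3 a4 a5 a6 a7 a8 a9 a10 a11 a12 a13 a14 a15 a16 a17 a18 a19 a20 a21 a22 a23) = St a0 a1 a2 a3 a4 a5 a6 a7 a8 a9 a10 a11 a12 a13 a14 z a16 a17 a18 a19 a20 a21 a22 a23"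
| "upd V16 z (St a0 a1 a2 a3 a4 a5 a6 a7 a8 a9 a10 a11 a12 a13 a14 a15 a16 a17 a18 a19 a20 a21 a22 a23) = St a0 a1 a2 a3 a4 a5 a6 a7 a8 a9 a10 a11 a12 a13 a14 a15 z a17 a18 a19 a20 a21 a22 a23"
| "upd V17 z (St a0 a1 a2 a3 a4 a5 a6 a7 a8 a9 a10 a11 a12 a13 a14 a15 a16 a17 a18 a19 a20 a21 a22 a23) = St a0 a1 a2 a3 a4 a5 a6 a7 a8 a9 a10 a11 a12 a13 a14 a15 a16 z a18 a19 a20 a21 a22 a23"
| "upd V18 z (St a0 a1 a2 a3 a4 a5 a6 a7 a8 a9 a10 a11 a12 a13 a14 a15 a16 a17 a18 a19 a20 a21 a22 a23) = St a0 a1 a2 a3 a4 a5 a6 a7 a8 a9 a10 a11 a12 a13 a14 a15 a16 a17 z a19 a20 a21 a22 a23"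
| "upd V19 z (St a0 a1 a2 a3 a4 a5 a6 a7 a8 a9 a10 a11 a12 a13 a14 a15 a16 a17 a18 a19 a20 a21 a22 a23) = St a0 a1 a2 a3 a4 a5 a6 a7 a8 a9 a10 a11 a12 a13 a14 a15 a16 a17 a18 z a20 a21 a22 a23"
| "upd V20 z (St a0 a1 a2 a3 a4 a5 a6 a7 a8 a9 a10 a11 a12 a13 a14 a15 a16 a17 a18 a19 a20 a21 a22 a23) = St a0 a1 a2 a3 a4 a5 a6 a7 a8 a9 a10 a11 a12 a13 a14 a15 a16 a17 a18 a19 z a21 a22 a23"
| "upd V21 z (St a0 a1 a2 a3 a4 a5 a6 a7 a8 a9 a10 a11 a12 a13 a14 a15 a16 a17 a18 a19 a20 a21 a22 a23) = St a0 a1 a2 a3 a4 a5 a6 a7 a8 a9 a10 a11 a12 a13 a14 a15 a16 a17 a18 a19 a20 z a22 a23"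
| "upd V22 z (St a0 a1 a2 a3 a4 a5 a6 a7 a8 a9 a10 a11 a12 a13 a14 a15 a16 a17 a18 a19 a20 a21 a22 a23) = St a0 a1 a2 a3 a4 a5 a6 a7 a8 a9 a10 a11 a12 a13 a14 a15 a16 a17 a18 a19 a20 a21 z a23"
| "upd V23 z (St a0 a1 a2 a3 a4 a5 a6 a7 a8 a9 a10 a11 a12 a13 a14 a15 a16 a17 a18 a19 a20 a21 a22 a23) = St a0 a1 a2 a3 a4 a5 a6 a7 a8 a9 a10 a11 a12 a13 a14 a15 a16 a17 a18 a19 a20 a21 a22 z"

lemma get_upd: "get v (upd w z \<sigma>) = (if v = w then z else get v \<sigma>)"
  by (cases \<sigma>; cases v; cases w; simp)

fun nrm :: "sta \<Rightarrow> sta" where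
  "nrm Fr = Fr" | "nrm Lo = Fr" | "nrm Out = Out" | "nrm InF = Out" | "nrm InS = Out"

fun norm :: "stt \<Rightarrow> stt" where
  "norm (St a0 a1 a2 a3 a4 a5 a6 a7 a8 a9 a10 a11 a12 a13 a14 a15 a16 a17 a18 a19 a20 a21 a22 a23) = St (nrm a0) (nrm a1) (nrm a2) (nrm a3) (nrm a4) (nrm a5) (nrm a6) (nrm a7) (nrm a8) (nrm a9) (nrm a10) (nrm a11) (nrm a12) (nrm a13) (nrm a14) (nrm a15) (nrm a16) (nrm a17) (nrm a18) (nrm a19) (nrm a20) (nrm a21) (nrm a22) (nrm a23)"

lemma get_norm: "get v (norm \<sigma>) = nrm (get v \<sigma>)"
  by (cases \<sigma>; cases v; simp)

definition S0 :: stt where "S0 = St Fr Fr Fr Fr Fr Fr Fr Fr Fr Fr Fr Fr Fr Fr Fr Fr Fr Fr Fr Fr Fr Fr Fr Fr"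

lemma get_S0: "get v S0 = Fr"
  by (cases v) (simp_all add: S0_def)

definition cntFr :: "stt \<Rightarrow> nat" where
  "cntFr \<sigma> = length (filter (\<lambda>v. get v \<sigma> = Fr) allv)"

lemma cntFr_card: "cntFr \<sigma> = card {v. get v \<sigma> = Fr}"
  unfolding cntFr_def distinct_length_filter[OF distinct_allv] UNIV_vx[symmetric] by simp

datatype call = Lv stt nat nat nat | Xl stt nat nat nat nat "vx list"
  | Xp stt "vx list" nat nat nat nat nat

primrec run :: "nat \<Rightarrow> call \<Rightarrow> bool" where
"run 0 c = True" |
"run (Suc n) c = (case c of
   Lv \<sigma> k b s1 \<Rightarrow> (if k \<le> Suc 0 then True else run n (Xl \<sigma> k b s1 (cntFr \<sigma>) allv))
 | Xl \<sigma> k b s1 cW xs \<Rightarrow> (case xs of [] \<Rightarrow> False | v # vs \<Rightarrow>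
      (if get v \<sigma> = Fr then (if k \<le> cW then (if run n (Xp (upd v InS \<sigma>) (nbr v) k b (cW - k) (Suc 0) s1) then True
         else run n (Xl (upd v Lo \<sigma>) k b s1 cW vs)) else False)
       else run n (Xl \<sigma> k b s1 cW vs)))
 | Xp \<sigma> Q k b r sz s1 \<Rightarrow> (case Q of
      [] \<Rightarrow> (if sz < s1 then False else if k \<le> Suc 0 then True else run n (Lv (norm \<sigma>) (k - 1) b sz))
    | y # Q' \<Rightarrow> (if get y \<sigma> = Fr then
           (if (if 0 < b \<and> 0 < r then run n (Xp (upd y InF \<sigma>) Q' k (b - 1) (r - 1) sz s1) else False) then True
            else if k \<le> r then run n (Xp (upd y InS \<sigma>) (nbr y @ Q') k b (r - k) (Suc sz) s1) else False)
         else if get y \<sigma> = Lo then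
           (if 0 < b \<and> 0 < r then run n (Xp (upd y InF \<sigma>) Q' k (b - 1) (r - 1) sz s1) else False)
         else run n (Xp \<sigma> Q' k b r sz s1))))"

lemma run_Lv: "run n (Lv \<sigma> k b s1) = (if n = 0 then True else if k \<le> Suc 0 then True
   else run (n - 1) (Xl \<sigma> k b s1 (cntFr \<sigma>) allv))"
  by (cases n) auto
lemma run_Xl0: "run n (Xl \<sigma> k b s1 cW []) = (n = 0)"
  by (cases n) auto
lemma run_Xl: "run n (Xl \<sigma> k b s1 cW (v # vs)) = (if n = 0 then True else
      (if get v \<sigma> = Fr then (if k \<le> cW then (if run (n - 1) (Xp (upd v InS \<sigma>) (nbr v) k b (cW - k) (Suc 0) s1) then True
         else run (n - 1) (Xl (upd v Lo \<sigma>) k b s1 cW vs)) else False)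
       else run (n - 1) (Xl \<sigma> k b s1 cW vs)))"
  by (cases n) auto
lemma run_Ex0: "run n (Xp \<sigma> [] k b r sz s1) = (if n = 0 then True else (if sz < s1 then False
   else if k \<le> Suc 0 then True else run (n - 1) (Lv (norm \<sigma>) (k - 1) b sz)))"
  by (cases n) auto
lemma run_Ex: "run n (Xp \<sigma> (y # Q') k b r sz s1) = (if n = 0 then True else (if get y \<sigma> = Fr then
           (if (if 0 < b \<and> 0 < r then run (n - 1) (Xp (upd y InF \<sigma>) Q' k (b - 1) (r - 1) sz s1) else False) then True
            else if k \<le> r then run (n - 1) (Xp (upd y InS \<sigma>) (nbr y @ Q') k b (r - k) (Suc sz) s1) else False)
         else if get y \<sigma> = Lo then
           (if 0 < b \<and> 0 < r then run (n - 1) (Xp (upd y InF \<sigma>) Q' k (b - 1) (r - 1) sz s1) else False)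
         else run (n - 1) (Xp \<sigma> Q' k b r sz s1)))"
  by (cases n) auto

lemmas EV = run_Lv run_Xl0 run_Xl run_Ex0 run_Ex get.simps upd.simps nbr.simps nrm.simps norm.simps
  cntFr_def allv_def filter.simps length_Cons list.size(3)
  sta.distinct if_True if_False simp_thms append.simps
  Suc_le_mono le0 le_zero_eq nat.distinct diff_Suc_Suc minus_nat.diff_0 diff_0_eq_0 Suc_less_eq zero_less_Suc
  less_nat_zero_code diff_Suc_1 numeral_neq_zero pred_numeral_def[symmetric] pred_numeral_simps BitM.simps

lemma eval4: "run 200 (Xp (upd V0 InS S0) (nbr V0) (Suc (Suc (Suc (Suc 0)))) (Suc (Suc (Suc (Suc (Suc (Suc (Suc (Suc (Suc 0))))))))) (Suc (Suc (Suc (Suc (Suc (Suc (Suc (Suc (Suc (Suc (Suc (Suc (Suc (Suc (Suc (Suc (Suc (Suc (Suc (Suc 0)))))))))))))))))))) (Suc 0) (Suc 0)) = False"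
  unfolding S0_def by (simp only: EV cong: if_weak_cong)

lemma eval5: "run 200 (Xp (upd V0 InS S0) (nbr V0) (Suc (Suc (Suc (Suc (Suc 0))))) (Suc (Suc (Suc (Suc (Suc (Suc (Suc (Suc (Suc (Suc (Suc 0))))))))))) (Suc (Suc (Suc (Suc (Suc (Suc (Suc (Suc (Suc (Suc (Suc (Suc (Suc (Suc (Suc (Suc (Suc (Suc (Suc 0))))))))))))))))))) (Suc 0) (Suc 0)) = False"
  unfolding S0_def by (simp only: EV cong: if_weak_cong)


section \<open>Soundness of the search\<close>

abbreviation comps :: "vx set \<Rightarrow> vx set set" where "comps X \<equiv> components X adjv"

definition Wof :: "stt \<Rightarrow> vx set" where "Wof \<sigma> = {v. get v \<sigma> \<noteq> Out}"
definition Sof :: "stt \<Rightarrow> vx set" where "Sof \<sigma> = {v. get v \<sigma> = InS}"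
definition Fof :: "stt \<Rightarrow> vx set" where "Fof \<sigma> = {v. get v \<sigma> = InF}"
definition Lof :: "stt \<Rightarrow> vx set" where "Lof \<sigma> = {v. get v \<sigma> = Lo}"

definition wEx :: "stt \<Rightarrow> vx list \<Rightarrow> nat \<Rightarrow> nat \<Rightarrow> nat \<Rightarrow> nat \<Rightarrow> nat \<Rightarrow> vx set \<Rightarrow> vx set set \<Rightarrow> vx set \<Rightarrow> nat \<Rightarrow> bool" where
  "wEx \<sigma> Q k b r sz s1 F cs C b0 \<longleftrightarrow>
    F \<subseteq> Wof \<sigma> \<and> card F \<le> b0 \<and> cs \<subseteq> comps (Wof \<sigma> - F) \<and> k \<le> card cs \<and> 2 \<le> k \<and>
    (\<forall>D\<in>cs. s1 \<le> card D) \<and> C \<in> cs \<and> (\<forall>D\<in>cs. card C \<le> card D) \<and>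
    Sof \<sigma> \<subseteq> C \<and> Sof \<sigma> \<noteq> {} \<and> Fof \<sigma> \<subseteq> F \<and> Lof \<sigma> \<inter> C = {} \<and>
    b + card (Fof \<sigma>) = b0 \<and> r + k * sz + card (Fof \<sigma>) = card (Wof \<sigma>) \<and> sz = card (Sof \<sigma>) \<and>
    (\<forall>y\<in>set Q. \<exists>s\<in>Sof \<sigma>. adjv s y) \<and>
    (\<forall>s\<in>Sof \<sigma>. \<forall>v\<in>Wof \<sigma>. adjv s v \<longrightarrow> v \<in> Sof \<sigma> \<or> v \<in> Fof \<sigma> \<or> v \<in> set Q)"

definition wXl :: "stt \<Rightarrow> nat \<Rightarrow> nat \<Rightarrow> nat \<Rightarrow> nat \<Rightarrow> vx list \<Rightarrow> vx set \<Rightarrow> vx set set \<Rightarrow> vx set \<Rightarrow> bool" where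
  "wXl \<sigma> k b s1 cW xs F cs C \<longleftrightarrow>
    (\<forall>v. get v \<sigma> = Out \<or> get v \<sigma> = Fr \<or> get v \<sigma> = Lo) \<and>
    F \<subseteq> Wof \<sigma> \<and> card F \<le> b \<and> cs \<subseteq> comps (Wof \<sigma> - F) \<and> k \<le> card cs \<and> 2 \<le> k \<and>
    (\<forall>D\<in>cs. s1 \<le> card D) \<and> C \<in> cs \<and> (\<forall>D\<in>cs. card C \<le> card D) \<and>
    C \<subseteq> set xs \<and> Lof \<sigma> \<inter> C = {} \<and> cW = card (Wof \<sigma>)"

definition wLv :: "stt \<Rightarrow> nat \<Rightarrow> nat \<Rightarrow> nat \<Rightarrow> bool" where
  "wLv \<sigma> k b s1 \<longleftrightarrow> (\<forall>v. get v \<sigma> = Out \<or> get v \<sigma> = Fr) \<and>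
    (\<exists>F cs. F \<subseteq> Wof \<sigma> \<and> card F \<le> b \<and> cs \<subseteq> comps (Wof \<sigma> - F) \<and> k \<le> card cs \<and> (\<forall>D\<in>cs. s1 \<le> card D))"

lemma size_bound:
  assumes "F \<subseteq> W" "cs \<subseteq> comps (W - F)" "k \<le> card cs" "C \<in> cs" "\<forall>D\<in>cs. card C \<le> card D"
  shows "k * card C + card F \<le> card W"
proof -
  have "card cs * card C \<le> card (W - F)"
    using G.comps_card_bound[of "W - F" cs "card C"] assms by auto
  moreover have "card (W - F) = card W - card F" using assms(1) by (simp add: card_Diff_subset)
  moreover have "card F \<le> card W" using assms(1) by (simp add: card_mono)
  moreover have "k * card C \<le> card cs * card C" using assms(3) by simp
  ultimately show ?thesis by linarith
qed

definition IHLd :: "nat \<Rightarrow> bool" where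
  "IHLd n \<longleftrightarrow> (\<forall>\<sigma> k b s1. wLv \<sigma> k b s1 \<longrightarrow> run n (Lv \<sigma> k b s1))"
definition IHXd :: "nat \<Rightarrow> bool" where
  "IHXd n \<longleftrightarrow> (\<forall>\<sigma> k b s1 cW xs F cs C. wXl \<sigma> k b s1 cW xs F cs C \<longrightarrow> run n (Xl \<sigma> k b s1 cW xs))"
definition IHEd :: "nat \<Rightarrow> bool" where
  "IHEd n \<longleftrightarrow> (\<forall>\<sigma> Q k b r sz s1 F cs C b0. wEx \<sigma> Q k b r sz s1 F cs C b0 \<longrightarrow> run n (Xp \<sigma> Q k b r sz s1))"
definition IHs :: "nat \<Rightarrow> bool" where
  "IHs n \<longleftrightarrow> IHLd n \<and> IHXd n \<and> IHEd n"

lemma IHs_L: "IHs n \<Longrightarrow> wLv \<sigma> k b s1 \<Longrightarrow> run n (Lv \<sigma> k b s1)"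
  unfolding IHs_def apply (elim conjE)
  apply (unfold IHLd_def)
  apply (drule spec[where x=\<sigma>])
  apply (drule spec[where x=k])
  apply (drule spec[where x=b])
  apply (drule spec[where x=s1])
  apply (erule impE)
  apply assumption
  apply assumption
  done
lemma IHs_X: "IHs n \<Longrightarrow> wXl \<sigma> k b s1 cW xs F cs C \<Longrightarrow> run n (Xl \<sigma> k b s1 cW xs)"
  unfolding IHs_def apply (elim conjE)
  apply (unfold IHXd_def)
  apply (drule spec[where x=\<sigma>])
  apply (drule spec[where x=k])
  apply (drule spec[where x=b])
  apply (drule spec[where x=s1])
  apply (drule spec[where x=cW])
  apply (drule spec[where x=xs])
  apply (drule spec[where x=F])
  apply (drule spec[where x=cs])
  apply (drule spec[where x=C])
  apply (erule impE)
  apply assumption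
  apply assumption
  done
lemma IHs_E: "IHs n \<Longrightarrow> wEx \<sigma> Q k b r sz s1 F cs C b0 \<Longrightarrow> run n (Xp \<sigma> Q k b r sz s1)"
  unfolding IHs_def apply (elim conjE)
  apply (unfold IHEd_def)
  apply (drule spec[where x=\<sigma>])
  apply (drule spec[where x=Q])
  apply (drule spec[where x=k])
  apply (drule spec[where x=b])
  apply (drule spec[where x=r])
  apply (drule spec[where x=sz])
  apply (drule spec[where x=s1])
  apply (drule spec[where x=F])
  apply (drule spec[where x=cs])
  apply (drule spec[where x=C])
  apply (drule spec[where x=b0])
  apply (erule impE)
  apply assumption
  apply assumption
  done

lemma step_Ex:
  assumes IH: "IHs n"
    and w: "wEx \<sigma> Q k b r sz s1 F cs C b0"
  shows "run (Suc n) (Xp \<sigma> Q k b r sz s1)"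
proof -
  let ?W = "Wof \<sigma>" and ?S = "Sof \<sigma>" and ?Fs = "Fof \<sigma>" and ?L = "Lof \<sigma>"
  from w have FW: "F \<subseteq> ?W" and cF: "card F \<le> b0" and cs: "cs \<subseteq> comps (?W - F)" and kcs: "k \<le> card cs"
    and k2: "2 \<le> k" and s1D: "\<forall>D\<in>cs. s1 \<le> card D" and C: "C \<in> cs" and Cmin: "\<forall>D\<in>cs. card C \<le> card D"
    and SC: "?S \<subseteq> C" and Sne: "?S \<noteq> {}" and FsF: "?Fs \<subseteq> F" and LC: "?L \<inter> C = {}"
    and bb: "b + card ?Fs = b0" and rr: "r + k * sz + card ?Fs = card ?W" and sz: "sz = card ?S"
    and Qadj: "\<forall>y\<in>set Q. \<exists>s\<in>?S. adjv s y"
    and fr: "\<forall>s\<in>?S. \<forall>v\<in>?W. adjv s v \<longrightarrow> v \<in> ?S \<or> v \<in> ?Fs \<or> v \<in> set Q"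
    unfolding wEx_def by blast+
  have Ccomp: "C \<in> comps (?W - F)" using C cs by blast
  have CWF: "C \<subseteq> ?W - F" using G.comp_sub[OF Ccomp] .
  have bound: "k * card C + card F \<le> card ?W" using size_bound[OF FW cs kcs C Cmin] .
  have szC: "sz \<le> card C" using sz SC by (simp add: card_mono)
  have cFs: "card ?Fs \<le> card F" using FsF by (simp add: card_mono)
  show ?thesis
  proof (cases Q)
    case Nil
    have CS: "C = ?S"
    proof -
      obtain x where x: "x \<in> ?S" using Sne by auto
      show ?thesis
      proof (rule G.comp_leaf[OF Ccomp x SC])
        fix s v assume "s \<in> ?S" "v \<in> ?W - F" "adjv s v"
        then show "v \<in> ?S" using fr FsF Nil by auto
      qed
    qed
    have s1sz: "\<not> sz < s1" using s1D C CS sz by auto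
    have lv: "wLv (norm \<sigma>) (k - 1) b sz"
    proof -
      have st: "\<forall>v. get v (norm \<sigma>) = Out \<or> get v (norm \<sigma>) = Fr"
        by (intro allI, unfold get_norm) (case_tac "get v \<sigma>"; simp)
      have W': "Wof (norm \<sigma>) = ?W - ?S - ?Fs"
        unfolding Wof_def Sof_def Fof_def get_norm
        by (auto elim!: nrm.elims)
      let ?F' = "F - ?Fs" and ?cs' = "cs - {C}"
      have F'W: "?F' \<subseteq> Wof (norm \<sigma>)" using W' FW CWF CS by auto
      have cF': "card ?F' \<le> b" using cF bb FsF by (simp add: card_Diff_subset)
      have eqX: "Wof (norm \<sigma>) - ?F' = (?W - F) - C" using W' CS FsF by auto
      have cs': "?cs' \<subseteq> comps (Wof (norm \<sigma>) - ?F')"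
        unfolding eqX using G.comp_remove[OF Ccomp] cs by blast
      have kcs': "k - 1 \<le> card ?cs'" using kcs C by (simp add: card_Diff_singleton)
      have s1': "\<forall>D\<in>?cs'. sz \<le> card D" using Cmin CS sz by auto
      show ?thesis unfolding wLv_def using st F'W cF' cs' kcs' s1' by blast
    qed
    show ?thesis using Nil s1sz IHs_L[OF IH lv] by simp
  next
    case (Cons y Q')
    have yadj: "\<exists>s\<in>?S. adjv s y" using Qadj Cons by auto
    have fbranch: "0 < b \<and> 0 < r \<and> run n (Xp (upd y InF \<sigma>) Q' k (b - 1) (r - 1) sz s1)"
      if yF: "y \<in> F" and yst: "get y \<sigma> = Fr \<or> get y \<sigma> = Lo"
    proof -
      have yFs: "y \<notin> ?Fs" using yst by (auto simp: Fof_def)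
      have c1: "card (insert y ?Fs) \<le> card F" using FsF yF by (intro card_mono) auto
      have c2: "card (insert y ?Fs) = Suc (card ?Fs)" using yFs by simp
      have b0: "0 < b" using c1 c2 cF bb by linarith
      have r0: "0 < r"
      proof -
        have "k * sz \<le> k * card C" using szC by simp
        then show ?thesis using rr bound c1 c2 by linarith
      qed
      have W': "Wof (upd y InF \<sigma>) = ?W" using yst by (auto simp: Wof_def get_upd)
      have S': "Sof (upd y InF \<sigma>) = ?S" using yst by (auto simp: Sof_def get_upd)
      have Fs': "Fof (upd y InF \<sigma>) = insert y ?Fs" by (auto simp: Fof_def get_upd)
      have L': "Lof (upd y InF \<sigma>) \<subseteq> ?L" by (auto simp: Lof_def get_upd)
      have "wEx (upd y InF \<sigma>) Q' k (b - 1) (r - 1) sz s1 F cs C b0"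
        unfolding wEx_def W' S' Fs'
      proof (intro conjI)
        show "Lof (upd y InF \<sigma>) \<inter> C = {}" using L' LC by auto
        show "b - 1 + card (insert y ?Fs) = b0" using c2 bb b0 by simp
        show "r - 1 + k * sz + card (insert y ?Fs) = card ?W" using c2 rr r0 by simp
        show "\<forall>ya\<in>set Q'. \<exists>s\<in>?S. adjv s ya" using Qadj Cons by auto
        show "\<forall>s\<in>?S. \<forall>v\<in>?W. adjv s v \<longrightarrow> v \<in> ?S \<or> v \<in> insert y ?Fs \<or> v \<in> set Q'"
          using fr Cons by auto
        show "insert y ?Fs \<subseteq> F" using FsF yF by auto
      qed (use FW cF cs kcs k2 s1D C Cmin SC Sne sz in auto)
      then show ?thesis using b0 r0 IHs_E[OF IH] by blast
    qed
    show ?thesis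
    proof (cases "get y \<sigma> = Fr \<or> get y \<sigma> = Lo")
      case yst: True
      show ?thesis
      proof (cases "y \<in> F")
        case True
        from fbranch[OF True yst] show ?thesis using Cons yst by auto
      next
        case yF: False
        have yW: "y \<in> ?W" using yst by (auto simp: Wof_def)
        obtain s where s: "s \<in> ?S" "adjv s y" using yadj by auto
        have yC: "y \<in> C" using G.comp_closed[OF Ccomp _ _ s(2)] s(1) SC yW yF by auto
        then have yFr: "get y \<sigma> = Fr" using yst LC by (auto simp: Lof_def)
        have yS: "y \<notin> ?S" using yFr by (auto simp: Sof_def)
        have cS: "card (insert y ?S) = Suc sz" using yS sz by simp
        have cSC: "Suc sz \<le> card C" using cS SC yC by (metis card_mono finite insert_subset)
        have kr: "k \<le> r"
        proof -
          have "k * Suc sz \<le> k * card C" using mult_le_mono2[OF cSC] .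
          then show ?thesis using rr bound cFs by simp
        qed
        have W': "Wof (upd y InS \<sigma>) = ?W" using yst by (auto simp: Wof_def get_upd)
        have S': "Sof (upd y InS \<sigma>) = insert y ?S" by (auto simp: Sof_def get_upd)
        have Fs': "Fof (upd y InS \<sigma>) = ?Fs" using yFr by (auto simp: Fof_def get_upd)
        have L': "Lof (upd y InS \<sigma>) = ?L" using yFr by (auto simp: Lof_def get_upd)
        have "wEx (upd y InS \<sigma>) (nbr y @ Q') k b (r - k) (Suc sz) s1 F cs C b0"
          unfolding wEx_def W' S' Fs' L'
        proof (intro conjI)
          show "insert y ?S \<subseteq> C" using SC yC by auto
          show "r - k + k * Suc sz + card ?Fs = card ?W" using rr kr by simp
          show "Suc sz = card (insert y ?S)" using cS by simp
          show "\<forall>ya\<in>set (nbr y @ Q'). \<exists>s\<in>insert y ?S. adjv s ya"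
            using Qadj Cons by (auto simp: adjv_def)
          show "\<forall>s\<in>insert y ?S. \<forall>v\<in>?W. adjv s v \<longrightarrow> v \<in> insert y ?S \<or> v \<in> ?Fs \<or> v \<in> set (nbr y @ Q')"
            using fr Cons by (auto simp: adjv_def)
        qed (use FW cF cs kcs k2 s1D C Cmin LC bb FsF in auto)
        then have "run n (Xp (upd y InS \<sigma>) (nbr y @ Q') k b (r - k) (Suc sz) s1)" by (rule IHs_E[OF IH])
        then show ?thesis using Cons yFr kr by simp
      qed
    next
      case yst: False
      have yo: "y \<notin> ?W \<or> y \<in> ?S \<or> y \<in> ?Fs" using yst
        by (cases "get y \<sigma>") (auto simp: Wof_def Sof_def Fof_def)
      have "wEx \<sigma> Q' k b r sz s1 F cs C b0"
        unfolding wEx_def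
      proof (intro conjI)
        show "\<forall>ya\<in>set Q'. \<exists>s\<in>?S. adjv s ya" using Qadj Cons by auto
        show "\<forall>s\<in>?S. \<forall>v\<in>?W. adjv s v \<longrightarrow> v \<in> ?S \<or> v \<in> ?Fs \<or> v \<in> set Q'"
          using fr Cons yo by auto
      qed (use FW cF cs kcs k2 s1D C Cmin SC Sne FsF LC bb rr sz in auto)
      then have "run n (Xp \<sigma> Q' k b r sz s1)" by (rule IHs_E[OF IH])
      then show ?thesis using Cons yst by auto
    qed
  qed
qed

lemma step_Xl:
  assumes IH: "IHs n"
    and w: "wXl \<sigma> k b s1 cW xs F cs C"
  shows "run (Suc n) (Xl \<sigma> k b s1 cW xs)"
proof -
  let ?W = "Wof \<sigma>" and ?L = "Lof \<sigma>"
  from w have st: "\<forall>v. get v \<sigma> = Out \<or> get v \<sigma> = Fr \<or> get v \<sigma> = Lo" and FW: "F \<subseteq> ?W"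
    and cF: "card F \<le> b" and cs: "cs \<subseteq> comps (?W - F)" and kcs: "k \<le> card cs"
    and k2: "2 \<le> k" and s1D: "\<forall>D\<in>cs. s1 \<le> card D" and C: "C \<in> cs" and Cmin: "\<forall>D\<in>cs. card C \<le> card D"
    and Cxs: "C \<subseteq> set xs" and LC: "?L \<inter> C = {}" and cW: "cW = card ?W"
    unfolding wXl_def by blast+
  have Ccomp: "C \<in> comps (?W - F)" using C cs by blast
  have CWF: "C \<subseteq> ?W - F" using G.comp_sub[OF Ccomp] .
  have Cne: "C \<noteq> {}" using G.comp_ne[OF Ccomp] .
  have bound: "k * card C + card F \<le> card ?W" using size_bound[OF FW cs kcs C Cmin] .
  have kcW: "k \<le> cW"
  proof -
    have "1 \<le> card C" using Cne by (simp add: Suc_le_eq card_gt_0_iff)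
    then have "k \<le> k * card C" by simp
    then show ?thesis using bound cW by linarith
  qed
  show ?thesis
  proof (cases xs)
    case Nil
    then show ?thesis using Cxs Cne by auto
  next
    case (Cons v vs)
    show ?thesis
    proof (cases "get v \<sigma> = Fr")
      case vFr: True
      show ?thesis
      proof (cases "v \<in> C")
        case vC: True
        have W': "Wof (upd v InS \<sigma>) = ?W" using vFr by (auto simp: Wof_def get_upd)
        have noSF: "get u \<sigma> \<noteq> InS \<and> get u \<sigma> \<noteq> InF" for u using st[rule_format, of u] by auto
        have S': "Sof (upd v InS \<sigma>) = {v}" using noSF by (auto simp: Sof_def get_upd)
        have Fs': "Fof (upd v InS \<sigma>) = {}" using noSF by (auto simp: Fof_def get_upd)
        have L': "Lof (upd v InS \<sigma>) = ?L" using vFr by (auto simp: Lof_def get_upd)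
        have "wEx (upd v InS \<sigma>) (nbr v) k b (cW - k) (Suc 0) s1 F cs C b"
          unfolding wEx_def W' S' Fs' L'
        proof (intro conjI)
          show "cW - k + k * Suc 0 + card {} = card ?W" using kcW cW by simp
          show "\<forall>y\<in>set (nbr v). \<exists>s\<in>{v}. adjv s y" by (auto simp: adjv_def)
          show "\<forall>s\<in>{v}. \<forall>u\<in>?W. adjv s u \<longrightarrow> u \<in> {v} \<or> u \<in> {} \<or> u \<in> set (nbr v)"
            by (auto simp: adjv_def)
        qed (use FW cF cs kcs k2 s1D C Cmin LC vC in auto)
        then have "run n (Xp (upd v InS \<sigma>) (nbr v) k b (cW - k) (Suc 0) s1)" by (rule IHs_E[OF IH])
        then show ?thesis using Cons vFr kcW by simp
      next
        case vC: False
        have W': "Wof (upd v Lo \<sigma>) = ?W" using vFr by (auto simp: Wof_def get_upd)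
        have L': "Lof (upd v Lo \<sigma>) = insert v ?L" by (auto simp: Lof_def get_upd)
        have "wXl (upd v Lo \<sigma>) k b s1 cW vs F cs C"
          unfolding wXl_def W' L'
        proof (intro conjI)
          show "\<forall>u. get u (upd v Lo \<sigma>) = Out \<or> get u (upd v Lo \<sigma>) = Fr \<or> get u (upd v Lo \<sigma>) = Lo"
            using st by (simp add: get_upd)
          show "C \<subseteq> set vs" using Cxs Cons vC by auto
          show "insert v ?L \<inter> C = {}" using LC vC by auto
        qed (use FW cF cs kcs k2 s1D C Cmin cW in auto)
        then have "run n (Xl (upd v Lo \<sigma>) k b s1 cW vs)" by (rule IHs_X[OF IH])
        then show ?thesis using Cons vFr kcW by simp
      qed
    next
      case vFr: False
      have vC: "v \<notin> C"
      proof
        assume vC: "v \<in> C"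
        then have "v \<in> ?W" using CWF by auto
        then have "get v \<sigma> = Lo" using st vFr by (auto simp: Wof_def)
        then show False using LC vC by (auto simp: Lof_def)
      qed
      have "wXl \<sigma> k b s1 cW vs F cs C"
        unfolding wXl_def
      proof (intro conjI)
        show "C \<subseteq> set vs" using Cxs Cons vC by auto
      qed (use st FW cF cs kcs k2 s1D C Cmin LC cW in auto)
      then have "run n (Xl \<sigma> k b s1 cW vs)" by (rule IHs_X[OF IH])
      then show ?thesis using Cons vFr by simp
    qed
  qed
qed

lemma step_Lv:
  assumes IH: "IHs n"
    and w: "wLv \<sigma> k b s1"
  shows "run (Suc n) (Lv \<sigma> k b s1)"
proof (cases "k \<le> Suc 0")
  case True
  then show ?thesis by simp
next
  case False
  from w obtain F cs where st: "\<forall>v. get v \<sigma> = Out \<or> get v \<sigma> = Fr" and FW: "F \<subseteq> Wof \<sigma>"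
    and cF: "card F \<le> b" and cs: "cs \<subseteq> comps (Wof \<sigma> - F)" and kcs: "k \<le> card cs"
    and s1D: "\<forall>D\<in>cs. s1 \<le> card D"
    unfolding wLv_def by blast
  have csne: "cs \<noteq> {}" using kcs False by auto
  have fincs: "finite cs" by simp
  obtain C where C: "C \<in> cs" and Cmin: "\<forall>D\<in>cs. card C \<le> card D"
  proof -
    have "Min (card ` cs) \<in> card ` cs" using csne fincs by (intro Min_in) auto
    then obtain C where "C \<in> cs" "card C = Min (card ` cs)" by auto
    moreover have "\<forall>D\<in>cs. Min (card ` cs) \<le> card D" using fincs by auto
    ultimately show ?thesis using that by auto
  qed
  have noL: "get u \<sigma> \<noteq> Lo" for u using st[rule_format, of u] by auto
  have L: "Lof \<sigma> = {}" using noL by (auto simp: Lof_def)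
  have cnt: "cntFr \<sigma> = card (Wof \<sigma>)"
  proof -
    have "{v. get v \<sigma> = Fr} = Wof \<sigma>" using st by (auto simp: Wof_def)
    then show ?thesis by (simp add: cntFr_card)
  qed
  have "wXl \<sigma> k b s1 (cntFr \<sigma>) allv F cs C"
    unfolding wXl_def L cnt
    using st FW cF cs kcs False s1D C Cmin UNIV_vx by auto
  then have "run n (Xl \<sigma> k b s1 (cntFr \<sigma>) allv)" by (rule IHs_X[OF IH])
  then show ?thesis using False by simp
qed

lemma sound: "IHs n"
proof (induction n)
  case 0
  then show ?case by (simp add: IHs_def IHLd_def IHXd_def IHEd_def)
next
  case (Suc n)
  have "IHLd (Suc n)" unfolding IHLd_def using step_Lv[OF Suc.IH] by blast
  moreover have "IHXd (Suc n)" unfolding IHXd_def using step_Xl[OF Suc.IH] by blast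
  moreover have "IHEd (Suc n)" unfolding IHEd_def using step_Ex[OF Suc.IH] by blast
  ultimately show ?case unfolding IHs_def by blast
qed


section \<open>Symmetry\<close>

definition aut :: "vx \<Rightarrow> vx \<Rightarrow> vx" where "aut x v = (case x of V0 \<Rightarrow> (case v of V0 \<Rightarrow> V0 | V1 \<Rightarrow> V1 | V2 \<Rightarrow> V2 | V3 \<Rightarrow> V3 | V4 \<Rightarrow> V4 | V5 \<Rightarrow> V5 | V6 \<Rightarrow> V6 | V7 \<Rightarrow> V7 | V8 \<Rightarrow> V8 | V9 \<Rightarrow> V9 | V10 \<Rightarrow> V10 | V11 \<Rightarrow> V11 | V12 \<Rightarrow> V12 | V13 \<Rightarrow> V13 | V14 \<Rightarrow> V14 | V15 \<Rightarrow> V15 | V16 \<Rightarrow> V16 | V17 \<Rightarrow> V17 | V18 \<Rightarrow> V18 | V19 \<Rightarrow> V19 | V20 \<Rightarrow> V20 | V21 \<Rightarrow> V21 | V22 \<Rightarrow> V22 | V23 \<Rightarrow> V23) | V1 \<Rightarrow> (case v of V0 \<Rightarrow> V1 | V1 \<Rightarrow> V0 | V2 \<Rightarrow> V4 | V3 \<Rightarrow> V5 | V4 \<Rightarrow> V2 | V5 \<Rightarrow> V3 | V6 \<Rightarrow> V7 | V7 \<Rightarrow> V6 | V8 \<Rightarrow> V10 | V9 \<Rightarrow> V11 | V10 \<Rightarrow> V8 | V11 \<Rightarrow> V9 | V12 \<Rightarrow> V18 | V13 \<Rightarrow> V19 | V14 \<Rightarrow> V20 | V15 \<Rightarrow> V21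 | V16 \<Rightarrow> V22 | V17 \<Rightarrow> V23 | V18 \<Rightarrow> V12 | V19 \<Rightarrow> V13 | V20 \<Rightarrow> V14 | V21 \<Rightarrow> V15 | V22 \<Rightarrow> V16 | V23 \<Rightarrow> V17) | V2 \<Rightarrow> (case v of V0 \<Rightarrow> V2 | V1 \<Rightarrow> V3 | V2 \<Rightarrow> V0 | V3 \<Rightarrow> V1 | V4 \<Rightarrow> V5 | V5 \<Rightarrow> V4 | V6 \<Rightarrow> V12 | V7 \<Rightarrow> V13 | V8 \<Rightarrow> V14 | V9 \<Rightarrow> V15 | V10 \<Rightarrow> V16 | V11 \<Rightarrow> V17 | V12 \<Rightarrow> V6 | V13 \<Rightarrow> V7 | V14 \<Rightarrow> V8 | V15 \<Rightarrow> V9 | V16 \<Rightarrow> V10 | V17 \<Rightarrow> V11 | V18 \<Rightarrow> V19 | V19 \<Rightarrow> V18 | V20 \<Rightarrow> V22 | V21 \<Rightarrow> V23 | V22 \<Rightarrow> V20 | V23 \<Rightarrow> V21) | V3 \<Rightarrow> (case v of V0 \<Rightarrow> V4 | V1 \<Rightarrow> V5 | V2 \<Rightarrow> V1 | V3 \<Rightarrow> V0 | V4 \<Rightarrow> V3 | V5 \<Rightarrow> V2 | V6 \<Rightarrow> V18 | V7 \<Rightarrow> V19 | V8 \<Rightarrow> V20 | V9 \<Rightarrow> V21 | V10 \<Rightarrow> V22 | V11 \<Rightarrow> V23 | V12 \<Rightarrow> V7 | V13 \<Rightarrow> V6 | V14 \<Rightarrow> V10 | V15 \<Rightarrow> V11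 | V16 \<Rightarrow> V8 | V17 \<Rightarrow> V9 | V18 \<Rightarrow> V13 | V19 \<Rightarrow> V12 | V20 \<Rightarrow> V16 | V21 \<Rightarrow> V17 | V22 \<Rightarrow> V14 | V23 \<Rightarrow> V15) | V4 \<Rightarrow> (case v of V0 \<Rightarrow> V3 | V1 \<Rightarrow> V2 | V2 \<Rightarrow> V5 | V3 \<Rightarrow> V4 | V4 \<Rightarrow> V0 | V5 \<Rightarrow> V1 | V6 \<Rightarrow> V13 | V7 \<Rightarrow> V12 | V8 \<Rightarrow> V16 | V9 \<Rightarrow> V17 | V10 \<Rightarrow> V14 | V11 \<Rightarrow> V15 | V12 \<Rightarrow> V19 | V13 \<Rightarrow> V18 | V14 \<Rightarrow> V22 | V15 \<Rightarrow> V23 | V16 \<Rightarrow> V20 | V17 \<Rightarrow> V21 | V18 \<Rightarrow> V6 | V19 \<Rightarrow> V7 | V20 \<Rightarrow> V8 | V21 \<Rightarrow> V9 | V22 \<Rightarrow> V10 | V23 \<Rightarrow> V11) | V5 \<Rightarrow> (case v of V0 \<Rightarrow> V5 | V1 \<Rightarrow> V4 | V2 \<Rightarrow> V3 | V3 \<Rightarrow> V2 | V4 \<Rightarrow> V1 | V5 \<Rightarrow> V0 | V6 \<Rightarrow> V19 | V7 \<Rightarrow> V18 | V8 \<Rightarrow> V22 | V9 \<Rightarrow> V23 | V10 \<Rightarrow> V20 | V11 \<Rightarrow> V21 | V12 \<Rightarrow> V13 | V13 \<Rightarrow> V12 | V14 \<Rightarrow> V16 | V15 \<Rightarrow> V17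 | V16 \<Rightarrow> V14 | V17 \<Rightarrow> V15 | V18 \<Rightarrow> V7 | V19 \<Rightarrow> V6 | V20 \<Rightarrow> V10 | V21 \<Rightarrow> V11 | V22 \<Rightarrow> V8 | V23 \<Rightarrow> V9) | V6 \<Rightarrow> (case v of V0 \<Rightarrow> V6 | V1 \<Rightarrow> V7 | V2 \<Rightarrow> V8 | V3 \<Rightarrow> V9 | V4 \<Rightarrow> V10 | V5 \<Rightarrow> V11 | V6 \<Rightarrow> V0 | V7 \<Rightarrow> V1 | V8 \<Rightarrow> V2 | V9 \<Rightarrow> V3 | V10 \<Rightarrow> V4 | V11 \<Rightarrow> V5 | V12 \<Rightarrow> V14 | V13 \<Rightarrow> V15 | V14 \<Rightarrow> V12 | V15 \<Rightarrow> V13 | V16 \<Rightarrow> V17 | V17 \<Rightarrow> V16 | V18 \<Rightarrow> V20 | V19 \<Rightarrow> V21 | V20 \<Rightarrow> V18 | V21 \<Rightarrow> V19 | V22 \<Rightarrow> V23 | V23 \<Rightarrow> V22) | V7 \<Rightarrow> (case v of V0 \<Rightarrow> V7 | V1 \<Rightarrow> V6 | V2 \<Rightarrow> V10 | V3 \<Rightarrow> V11 | V4 \<Rightarrow> V8 | V5 \<Rightarrow> V9 | V6 \<Rightarrow> V1 | V7 \<Rightarrow> V0 | V8 \<Rightarrow> V4 | V9 \<Rightarrow> V5 | V10 \<Rightarrow> V2 | V11 \<Rightarrow> V3 | V12 \<Rightarrow> V20 | V13 \<Rightarrow> V21 | V14 \<Rightarrow> V18 | V15 \<Rightarrow> V19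 | V16 \<Rightarrow> V23 | V17 \<Rightarrow> V22 | V18 \<Rightarrow> V14 | V19 \<Rightarrow> V15 | V20 \<Rightarrow> V12 | V21 \<Rightarrow> V13 | V22 \<Rightarrow> V17 | V23 \<Rightarrow> V16) | V8 \<Rightarrow> (case v of V0 \<Rightarrow> V12 | V1 \<Rightarrow> V13 | V2 \<Rightarrow> V14 | V3 \<Rightarrow> V15 | V4 \<Rightarrow> V16 | V5 \<Rightarrow> V17 | V6 \<Rightarrow> V2 | V7 \<Rightarrow> V3 | V8 \<Rightarrow> V0 | V9 \<Rightarrow> V1 | V10 \<Rightarrow> V5 | V11 \<Rightarrow> V4 | V12 \<Rightarrow> V8 | V13 \<Rightarrow> V9 | V14 \<Rightarrow> V6 | V15 \<Rightarrow> V7 | V16 \<Rightarrow> V11 | V17 \<Rightarrow> V10 | V18 \<Rightarrow> V22 | V19 \<Rightarrow> V23 | V20 \<Rightarrow> V19 | V21 \<Rightarrow> V18 | V22 \<Rightarrow> V21 | V23 \<Rightarrow> V20) | V9 \<Rightarrow> (case v of V0 \<Rightarrow> V18 | V1 \<Rightarrow> V19 | V2 \<Rightarrow> V20 | V3 \<Rightarrow> V21 | V4 \<Rightarrow> V22 | V5 \<Rightarrow> V23 | V6 \<Rightarrow> V4 | V7 \<Rightarrow> V5 | V8 \<Rightarrow> V1 | V9 \<Rightarrow> V0 | V10 \<Rightarrow> V3 | V11 \<Rightarrow> V2 | V12 \<Rightarrow> V10 | V13 \<Rightarrow> V11 | V14 \<Rightarrow> V7 | V15 \<Rightarrow> V6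 | V16 \<Rightarrow> V9 | V17 \<Rightarrow> V8 | V18 \<Rightarrow> V16 | V19 \<Rightarrow> V17 | V20 \<Rightarrow> V13 | V21 \<Rightarrow> V12 | V22 \<Rightarrow> V15 | V23 \<Rightarrow> V14) | V10 \<Rightarrow> (case v of V0 \<Rightarrow> V13 | V1 \<Rightarrow> V12 | V2 \<Rightarrow> V16 | V3 \<Rightarrow> V17 | V4 \<Rightarrow> V14 | V5 \<Rightarrow> V15 | V6 \<Rightarrow> V3 | V7 \<Rightarrow> V2 | V8 \<Rightarrow> V5 | V9 \<Rightarrow> V4 | V10 \<Rightarrow> V0 | V11 \<Rightarrow> V1 | V12 \<Rightarrow> V22 | V13 \<Rightarrow> V23 | V14 \<Rightarrow> V19 | V15 \<Rightarrow> V18 | V16 \<Rightarrow> V21 | V17 \<Rightarrow> V20 | V18 \<Rightarrow> V8 | V19 \<Rightarrow> V9 | V20 \<Rightarrow> V6 | V21 \<Rightarrow> V7 | V22 \<Rightarrow> V11 | V23 \<Rightarrow> V10) | V11 \<Rightarrow> (case v of V0 \<Rightarrow> V19 | V1 \<Rightarrow> V18 | V2 \<Rightarrow> V22 | V3 \<Rightarrow> V23 | V4 \<Rightarrow> V20 | V5 \<Rightarrow> V21 | V6 \<Rightarrow> V5 | V7 \<Rightarrow> V4 | V8 \<Rightarrow> V3 | V9 \<Rightarrow> V2 | V10 \<Rightarrow> V1 | V11 \<Rightarrow> V0 | V12 \<Rightarrow> V16 | V13 \<Rightarrow> V17 | V14 \<Rightarrow> V13 | V15 \<Rightarrow> V12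 | V16 \<Rightarrow> V15 | V17 \<Rightarrow> V14 | V18 \<Rightarrow> V10 | V19 \<Rightarrow> V11 | V20 \<Rightarrow> V7 | V21 \<Rightarrow> V6 | V22 \<Rightarrow> V9 | V23 \<Rightarrow> V8) | V12 \<Rightarrow> (case v of V0 \<Rightarrow> V8 | V1 \<Rightarrow> V9 | V2 \<Rightarrow> V6 | V3 \<Rightarrow> V7 | V4 \<Rightarrow> V11 | V5 \<Rightarrow> V10 | V6 \<Rightarrow> V14 | V7 \<Rightarrow> V15 | V8 \<Rightarrow> V12 | V9 \<Rightarrow> V13 | V10 \<Rightarrow> V17 | V11 \<Rightarrow> V16 | V12 \<Rightarrow> V0 | V13 \<Rightarrow> V1 | V14 \<Rightarrow> V2 | V15 \<Rightarrow> V3 | V16 \<Rightarrow> V4 | V17 \<Rightarrow> V5 | V18 \<Rightarrow> V21 | V19 \<Rightarrow> V20 | V20 \<Rightarrow> V23 | V21 \<Rightarrow> V22 | V22 \<Rightarrow> V18 | V23 \<Rightarrow> V19) | V13 \<Rightarrow> (case v of V0 \<Rightarrow> V10 | V1 \<Rightarrow> V11 | V2 \<Rightarrow> V7 | V3 \<Rightarrow> V6 | V4 \<Rightarrow> V9 | V5 \<Rightarrow> V8 | V6 \<Rightarrow> V20 | V7 \<Rightarrow> V21 | V8 \<Rightarrow> V18 | V9 \<Rightarrow> V19 | V10 \<Rightarrow> V23 | V11 \<Rightarrow> V22 | V12 \<Rightarrow> V1 | V13 \<Rightarrow> V0 | V14 \<Rightarrow> V4 | V15 \<Rightarrow> V5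 | V16 \<Rightarrow> V2 | V17 \<Rightarrow> V3 | V18 \<Rightarrow> V15 | V19 \<Rightarrow> V14 | V20 \<Rightarrow> V17 | V21 \<Rightarrow> V16 | V22 \<Rightarrow> V12 | V23 \<Rightarrow> V13) | V14 \<Rightarrow> (case v of V0 \<Rightarrow> V14 | V1 \<Rightarrow> V15 | V2 \<Rightarrow> V12 | V3 \<Rightarrow> V13 | V4 \<Rightarrow> V17 | V5 \<Rightarrow> V16 | V6 \<Rightarrow> V8 | V7 \<Rightarrow> V9 | V8 \<Rightarrow> V6 | V9 \<Rightarrow> V7 | V10 \<Rightarrow> V11 | V11 \<Rightarrow> V10 | V12 \<Rightarrow> V2 | V13 \<Rightarrow> V3 | V14 \<Rightarrow> V0 | V15 \<Rightarrow> V1 | V16 \<Rightarrow> V5 | V17 \<Rightarrow> V4 | V18 \<Rightarrow> V23 | V19 \<Rightarrow> V22 | V20 \<Rightarrow> V21 | V21 \<Rightarrow> V20 | V22 \<Rightarrow> V19 | V23 \<Rightarrow> V18) | V15 \<Rightarrow> (case v of V0 \<Rightarrow> V20 | V1 \<Rightarrow> V21 | V2 \<Rightarrow> V18 | V3 \<Rightarrow> V19 | V4 \<Rightarrow> V23 | V5 \<Rightarrow> V22 | V6 \<Rightarrow> V10 | V7 \<Rightarrow> V11 | V8 \<Rightarrow> V7 | V9 \<Rightarrow> V6 | V10 \<Rightarrow> V9 | V11 \<Rightarrow> V8 | V12 \<Rightarrow> V4 | V13 \<Rightarrow> V5 | V14 \<Rightarrow> V1 | V15 \<Rightarrow> V0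 | V16 \<Rightarrow> V3 | V17 \<Rightarrow> V2 | V18 \<Rightarrow> V17 | V19 \<Rightarrow> V16 | V20 \<Rightarrow> V15 | V21 \<Rightarrow> V14 | V22 \<Rightarrow> V13 | V23 \<Rightarrow> V12) | V16 \<Rightarrow> (case v of V0 \<Rightarrow> V16 | V1 \<Rightarrow> V17 | V2 \<Rightarrow> V13 | V3 \<Rightarrow> V12 | V4 \<Rightarrow> V15 | V5 \<Rightarrow> V14 | V6 \<Rightarrow> V22 | V7 \<Rightarrow> V23 | V8 \<Rightarrow> V19 | V9 \<Rightarrow> V18 | V10 \<Rightarrow> V21 | V11 \<Rightarrow> V20 | V12 \<Rightarrow> V3 | V13 \<Rightarrow> V2 | V14 \<Rightarrow> V5 | V15 \<Rightarrow> V4 | V16 \<Rightarrow> V0 | V17 \<Rightarrow> V1 | V18 \<Rightarrow> V9 | V19 \<Rightarrow> V8 | V20 \<Rightarrow> V11 | V21 \<Rightarrow> V10 | V22 \<Rightarrow> V6 | V23 \<Rightarrow> V7) | V17 \<Rightarrow> (case v of V0 \<Rightarrow> V22 | V1 \<Rightarrow> V23 | V2 \<Rightarrow> V19 | V3 \<Rightarrow> V18 | V4 \<Rightarrow> V21 | V5 \<Rightarrow> V20 | V6 \<Rightarrow> V16 | V7 \<Rightarrow> V17 | V8 \<Rightarrow> V13 | V9 \<Rightarrow> V12 | V10 \<Rightarrow> V15 | V11 \<Rightarrow> V14 | V12 \<Rightarrow> V5 | V13 \<Rightarrow> V4 | V14 \<Rightarrow> V3 | V15 \<Rightarrow> V2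 | V16 \<Rightarrow> V1 | V17 \<Rightarrow> V0 | V18 \<Rightarrow> V11 | V19 \<Rightarrow> V10 | V20 \<Rightarrow> V9 | V21 \<Rightarrow> V8 | V22 \<Rightarrow> V7 | V23 \<Rightarrow> V6) | V18 \<Rightarrow> (case v of V0 \<Rightarrow> V9 | V1 \<Rightarrow> V8 | V2 \<Rightarrow> V11 | V3 \<Rightarrow> V10 | V4 \<Rightarrow> V6 | V5 \<Rightarrow> V7 | V6 \<Rightarrow> V15 | V7 \<Rightarrow> V14 | V8 \<Rightarrow> V17 | V9 \<Rightarrow> V16 | V10 \<Rightarrow> V12 | V11 \<Rightarrow> V13 | V12 \<Rightarrow> V21 | V13 \<Rightarrow> V20 | V14 \<Rightarrow> V23 | V15 \<Rightarrow> V22 | V16 \<Rightarrow> V18 | V17 \<Rightarrow> V19 | V18 \<Rightarrow> V0 | V19 \<Rightarrow> V1 | V20 \<Rightarrow> V2 | V21 \<Rightarrow> V3 | V22 \<Rightarrow> V4 | V23 \<Rightarrow> V5) | V19 \<Rightarrow> (case v of V0 \<Rightarrow> V11 | V1 \<Rightarrow> V10 | V2 \<Rightarrow> V9 | V3 \<Rightarrow> V8 | V4 \<Rightarrow> V7 | V5 \<Rightarrow> V6 | V6 \<Rightarrow> V21 | V7 \<Rightarrow> V20 | V8 \<Rightarrow> V23 | V9 \<Rightarrow> V22 | V10 \<Rightarrow> V18 | V11 \<Rightarrow> V19 | V12 \<Rightarrow> V15 | V13 \<Rightarrow> V14 | V14 \<Rightarrow> V17 | V15 \<Rightarrow> V16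 | V16 \<Rightarrow> V12 | V17 \<Rightarrow> V13 | V18 \<Rightarrow> V1 | V19 \<Rightarrow> V0 | V20 \<Rightarrow> V4 | V21 \<Rightarrow> V5 | V22 \<Rightarrow> V2 | V23 \<Rightarrow> V3) | V20 \<Rightarrow> (case v of V0 \<Rightarrow> V15 | V1 \<Rightarrow> V14 | V2 \<Rightarrow> V17 | V3 \<Rightarrow> V16 | V4 \<Rightarrow> V12 | V5 \<Rightarrow> V13 | V6 \<Rightarrow> V9 | V7 \<Rightarrow> V8 | V8 \<Rightarrow> V11 | V9 \<Rightarrow> V10 | V10 \<Rightarrow> V6 | V11 \<Rightarrow> V7 | V12 \<Rightarrow> V23 | V13 \<Rightarrow> V22 | V14 \<Rightarrow> V21 | V15 \<Rightarrow> V20 | V16 \<Rightarrow> V19 | V17 \<Rightarrow> V18 | V18 \<Rightarrow> V2 | V19 \<Rightarrow> V3 | V20 \<Rightarrow> V0 | V21 \<Rightarrow> V1 | V22 \<Rightarrow> V5 | V23 \<Rightarrow> V4) | V21 \<Rightarrow> (case v of V0 \<Rightarrow> V21 | V1 \<Rightarrow> V20 | V2 \<Rightarrow> V23 | V3 \<Rightarrow> V22 | V4 \<Rightarrow> V18 | V5 \<Rightarrow> V19 | V6 \<Rightarrow> V11 | V7 \<Rightarrow> V10 | V8 \<Rightarrow> V9 | V9 \<Rightarrow> V8 | V10 \<Rightarrow> V7 | V11 \<Rightarrow> V6 | V12 \<Rightarrow> V17 | V13 \<Rightarrow> V16 | V14 \<Rightarrow> V15 | V15 \<Rightarrow> V14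 | V16 \<Rightarrow> V13 | V17 \<Rightarrow> V12 | V18 \<Rightarrow> V4 | V19 \<Rightarrow> V5 | V20 \<Rightarrow> V1 | V21 \<Rightarrow> V0 | V22 \<Rightarrow> V3 | V23 \<Rightarrow> V2) | V22 \<Rightarrow> (case v of V0 \<Rightarrow> V17 | V1 \<Rightarrow> V16 | V2 \<Rightarrow> V15 | V3 \<Rightarrow> V14 | V4 \<Rightarrow> V13 | V5 \<Rightarrow> V12 | V6 \<Rightarrow> V23 | V7 \<Rightarrow> V22 | V8 \<Rightarrow> V21 | V9 \<Rightarrow> V20 | V10 \<Rightarrow> V19 | V11 \<Rightarrow> V18 | V12 \<Rightarrow> V9 | V13 \<Rightarrow> V8 | V14 \<Rightarrow> V11 | V15 \<Rightarrow> V10 | V16 \<Rightarrow> V6 | V17 \<Rightarrow> V7 | V18 \<Rightarrow> V3 | V19 \<Rightarrow> V2 | V20 \<Rightarrow> V5 | V21 \<Rightarrow> V4 | V22 \<Rightarrow> V0 | V23 \<Rightarrow> V1) | V23 \<Rightarrow> (case v of V0 \<Rightarrow> V23 | V1 \<Rightarrow> V22 | V2 \<Rightarrow> V21 | V3 \<Rightarrow> V20 | V4 \<Rightarrow> V19 | V5 \<Rightarrow> V18 | V6 \<Rightarrow> V17 | V7 \<Rightarrow> V16 | V8 \<Rightarrow> V15 | V9 \<Rightarrow> V14 | V10 \<Rightarrow> V13 | V11 \<Rightarrow> V12 | V12 \<Rightarrow> V11 | V13 \<Rightarrow> V10 | V14 \<Rightarrow> V9 | V15 \<Rightarrow> V8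 | V16 \<Rightarrow> V7 | V17 \<Rightarrow> V6 | V18 \<Rightarrow> V5 | V19 \<Rightarrow> V4 | V20 \<Rightarrow> V3 | V21 \<Rightarrow> V2 | V22 \<Rightarrow> V1 | V23 \<Rightarrow> V0))"
definition ainv :: "vx \<Rightarrow> vx \<Rightarrow> vx" where "ainv x v = (case x of V0 \<Rightarrow> (case v of V0 \<Rightarrow> V0 | V1 \<Rightarrow> V1 | V2 \<Rightarrow> V2 | V3 \<Rightarrow> V3 | V4 \<Rightarrow> V4 | V5 \<Rightarrow> V5 | V6 \<Rightarrow> V6 | V7 \<Rightarrow> V7 | V8 \<Rightarrow> V8 | V9 \<Rightarrow> V9 | V10 \<Rightarrow> V10 | V11 \<Rightarrow> V11 | V12 \<Rightarrow> V12 | V13 \<Rightarrow> V13 | V14 \<Rightarrow> V14 | V15 \<Rightarrow> V15 | V16 \<Rightarrow> V16 | V17 \<Rightarrow> V17 | V18 \<Rightarrow> V18 | V19 \<Rightarrow> V19 | V20 \<Rightarrow> V20 | V21 \<Rightarrow> V21 | V22 \<Rightarrow> V22 | V23 \<Rightarrow> V23) | V1 \<Rightarrow> (case v of V0 \<Rightarrow> V1 | V1 \<Rightarrow> V0 | V2 \<Rightarrow> V4 | V3 \<Rightarrow> V5 | V4 \<Rightarrow> V2 | V5 \<Rightarrow> V3 | V6 \<Rightarrow> V7 | V7 \<Rightarrow> V6 | V8 \<Rightarrow> V10 | V9 \<Rightarrow> V11 | V10 \<Rightarrow> V8 | V11 \<Rightarrow> V9 | V12 \<Rightarrow> V18 |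 V13 \<Rightarrow> V19 | V14 \<Rightarrow> V20 | V15 \<Rightarrow> V21 | V16 \<Rightarrow> V22 | V17 \<Rightarrow> V23 | V18 \<Rightarrow> V12 | V19 \<Rightarrow> V13 | V20 \<Rightarrow> V14 | V21 \<Rightarrow> V15 | V22 \<Rightarrow> V16 | V23 \<Rightarrow> V17) | V2 \<Rightarrow> (case v of V0 \<Rightarrow> V2 | V1 \<Rightarrow> V3 | V2 \<Rightarrow> V0 | V3 \<Rightarrow> V1 | V4 \<Rightarrow> V5 | V5 \<Rightarrow> V4 | V6 \<Rightarrow> V12 | V7 \<Rightarrow> V13 | V8 \<Rightarrow> V14 | V9 \<Rightarrow> V15 | V10 \<Rightarrow> V16 | V11 \<Rightarrow> V17 | V12 \<Rightarrow> V6 | V13 \<Rightarrow> V7 | V14 \<Rightarrow> V8 | V15 \<Rightarrow> V9 | V16 \<Rightarrow> V10 | V17 \<Rightarrow> V11 | V18 \<Rightarrow> V19 | V19 \<Rightarrow> V18 | V20 \<Rightarrow> V22 | V21 \<Rightarrow> V23 | V22 \<Rightarrow> V20 | V23 \<Rightarrow> V21) | V3 \<Rightarrow> (case v of V0 \<Rightarrow> V3 | V1 \<Rightarrow> V2 | V2 \<Rightarrow> V5 | V3 \<Rightarrow> V4 | V4 \<Rightarrow> V0 | V5 \<Rightarrow> V1 | V6 \<Rightarrow> V13 | V7 \<Rightarrow> V12 | V8 \<Rightarrow> V16 | V9 \<Rightarrow> V17 | V10 \<Rightarrow> V14 | V11 \<Rightarrow> V15 | V12 \<Rightarrow> V19 |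 V13 \<Rightarrow> V18 | V14 \<Rightarrow> V22 | V15 \<Rightarrow> V23 | V16 \<Rightarrow> V20 | V17 \<Rightarrow> V21 | V18 \<Rightarrow> V6 | V19 \<Rightarrow> V7 | V20 \<Rightarrow> V8 | V21 \<Rightarrow> V9 | V22 \<Rightarrow> V10 | V23 \<Rightarrow> V11) | V4 \<Rightarrow> (case v of V0 \<Rightarrow> V4 | V1 \<Rightarrow> V5 | V2 \<Rightarrow> V1 | V3 \<Rightarrow> V0 | V4 \<Rightarrow> V3 | V5 \<Rightarrow> V2 | V6 \<Rightarrow> V18 | V7 \<Rightarrow> V19 | V8 \<Rightarrow> V20 | V9 \<Rightarrow> V21 | V10 \<Rightarrow> V22 | V11 \<Rightarrow> V23 | V12 \<Rightarrow> V7 | V13 \<Rightarrow> V6 | V14 \<Rightarrow> V10 | V15 \<Rightarrow> V11 | V16 \<Rightarrow> V8 | V17 \<Rightarrow> V9 | V18 \<Rightarrow> V13 | V19 \<Rightarrow> V12 | V20 \<Rightarrow> V16 | V21 \<Rightarrow> V17 | V22 \<Rightarrow> V14 | V23 \<Rightarrow> V15) | V5 \<Rightarrow> (case v of V0 \<Rightarrow> V5 | V1 \<Rightarrow> V4 | V2 \<Rightarrow> V3 | V3 \<Rightarrow> V2 | V4 \<Rightarrow> V1 | V5 \<Rightarrow> V0 | V6 \<Rightarrow> V19 | V7 \<Rightarrow> V18 | V8 \<Rightarrow> V22 | V9 \<Rightarrow> V23 | V10 \<Rightarrow> V20 | V11 \<Rightarrow> V21 | V12 \<Rightarrow> V13 |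 V13 \<Rightarrow> V12 | V14 \<Rightarrow> V16 | V15 \<Rightarrow> V17 | V16 \<Rightarrow> V14 | V17 \<Rightarrow> V15 | V18 \<Rightarrow> V7 | V19 \<Rightarrow> V6 | V20 \<Rightarrow> V10 | V21 \<Rightarrow> V11 | V22 \<Rightarrow> V8 | V23 \<Rightarrow> V9) | V6 \<Rightarrow> (case v of V0 \<Rightarrow> V6 | V1 \<Rightarrow> V7 | V2 \<Rightarrow> V8 | V3 \<Rightarrow> V9 | V4 \<Rightarrow> V10 | V5 \<Rightarrow> V11 | V6 \<Rightarrow> V0 | V7 \<Rightarrow> V1 | V8 \<Rightarrow> V2 | V9 \<Rightarrow> V3 | V10 \<Rightarrow> V4 | V11 \<Rightarrow> V5 | V12 \<Rightarrow> V14 | V13 \<Rightarrow> V15 | V14 \<Rightarrow> V12 | V15 \<Rightarrow> V13 | V16 \<Rightarrow> V17 | V17 \<Rightarrow> V16 | V18 \<Rightarrow> V20 | V19 \<Rightarrow> V21 | V20 \<Rightarrow> V18 | V21 \<Rightarrow> V19 | V22 \<Rightarrow> V23 | V23 \<Rightarrow> V22) | V7 \<Rightarrow> (case v of V0 \<Rightarrow> V7 | V1 \<Rightarrow> V6 | V2 \<Rightarrow> V10 | V3 \<Rightarrow> V11 | V4 \<Rightarrow> V8 | V5 \<Rightarrow> V9 | V6 \<Rightarrow> V1 | V7 \<Rightarrow> V0 | V8 \<Rightarrow> V4 | V9 \<Rightarrow> V5 | V10 \<Rightarrow> V2 | V11 \<Rightarrow> V3 | V12 \<Rightarrow> V20 |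 V13 \<Rightarrow> V21 | V14 \<Rightarrow> V18 | V15 \<Rightarrow> V19 | V16 \<Rightarrow> V23 | V17 \<Rightarrow> V22 | V18 \<Rightarrow> V14 | V19 \<Rightarrow> V15 | V20 \<Rightarrow> V12 | V21 \<Rightarrow> V13 | V22 \<Rightarrow> V17 | V23 \<Rightarrow> V16) | V8 \<Rightarrow> (case v of V0 \<Rightarrow> V8 | V1 \<Rightarrow> V9 | V2 \<Rightarrow> V6 | V3 \<Rightarrow> V7 | V4 \<Rightarrow> V11 | V5 \<Rightarrow> V10 | V6 \<Rightarrow> V14 | V7 \<Rightarrow> V15 | V8 \<Rightarrow> V12 | V9 \<Rightarrow> V13 | V10 \<Rightarrow> V17 | V11 \<Rightarrow> V16 | V12 \<Rightarrow> V0 | V13 \<Rightarrow> V1 | V14 \<Rightarrow> V2 | V15 \<Rightarrow> V3 | V16 \<Rightarrow> V4 | V17 \<Rightarrow> V5 | V18 \<Rightarrow> V21 | V19 \<Rightarrow> V20 | V20 \<Rightarrow> V23 | V21 \<Rightarrow> V22 | V22 \<Rightarrow> V18 | V23 \<Rightarrow> V19) | V9 \<Rightarrow> (case v of V0 \<Rightarrow> V9 | V1 \<Rightarrow> V8 | V2 \<Rightarrow> V11 | V3 \<Rightarrow> V10 | V4 \<Rightarrow> V6 | V5 \<Rightarrow> V7 | V6 \<Rightarrow> V15 | V7 \<Rightarrow> V14 | V8 \<Rightarrow> V17 | V9 \<Rightarrow> V16 | V10 \<Rightarrow> V12 | V11 \<Rightarrow> V13 | V12 \<Rightarrow> V21 |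 V13 \<Rightarrow> V20 | V14 \<Rightarrow> V23 | V15 \<Rightarrow> V22 | V16 \<Rightarrow> V18 | V17 \<Rightarrow> V19 | V18 \<Rightarrow> V0 | V19 \<Rightarrow> V1 | V20 \<Rightarrow> V2 | V21 \<Rightarrow> V3 | V22 \<Rightarrow> V4 | V23 \<Rightarrow> V5) | V10 \<Rightarrow> (case v of V0 \<Rightarrow> V10 | V1 \<Rightarrow> V11 | V2 \<Rightarrow> V7 | V3 \<Rightarrow> V6 | V4 \<Rightarrow> V9 | V5 \<Rightarrow> V8 | V6 \<Rightarrow> V20 | V7 \<Rightarrow> V21 | V8 \<Rightarrow> V18 | V9 \<Rightarrow> V19 | V10 \<Rightarrow> V23 | V11 \<Rightarrow> V22 | V12 \<Rightarrow> V1 | V13 \<Rightarrow> V0 | V14 \<Rightarrow> V4 | V15 \<Rightarrow> V5 | V16 \<Rightarrow> V2 | V17 \<Rightarrow> V3 | V18 \<Rightarrow> V15 | V19 \<Rightarrow> V14 | V20 \<Rightarrow> V17 | V21 \<Rightarrow> V16 | V22 \<Rightarrow> V12 | V23 \<Rightarrow> V13) | V11 \<Rightarrow> (case v of V0 \<Rightarrow> V11 | V1 \<Rightarrow> V10 | V2 \<Rightarrow> V9 | V3 \<Rightarrow> V8 | V4 \<Rightarrow> V7 | V5 \<Rightarrow> V6 | V6 \<Rightarrow> V21 | V7 \<Rightarrow> V20 | V8 \<Rightarrow> V23 | V9 \<Rightarrow> V22 | V10 \<Rightarrow> V18 | V11 \<Rightarrow> V19 | V12 \<Rightarrow> V15 |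 V13 \<Rightarrow> V14 | V14 \<Rightarrow> V17 | V15 \<Rightarrow> V16 | V16 \<Rightarrow> V12 | V17 \<Rightarrow> V13 | V18 \<Rightarrow> V1 | V19 \<Rightarrow> V0 | V20 \<Rightarrow> V4 | V21 \<Rightarrow> V5 | V22 \<Rightarrow> V2 | V23 \<Rightarrow> V3) | V12 \<Rightarrow> (case v of V0 \<Rightarrow> V12 | V1 \<Rightarrow> V13 | V2 \<Rightarrow> V14 | V3 \<Rightarrow> V15 | V4 \<Rightarrow> V16 | V5 \<Rightarrow> V17 | V6 \<Rightarrow> V2 | V7 \<Rightarrow> V3 | V8 \<Rightarrow> V0 | V9 \<Rightarrow> V1 | V10 \<Rightarrow> V5 | V11 \<Rightarrow> V4 | V12 \<Rightarrow> V8 | V13 \<Rightarrow> V9 | V14 \<Rightarrow> V6 | V15 \<Rightarrow> V7 | V16 \<Rightarrow> V11 | V17 \<Rightarrow> V10 | V18 \<Rightarrow> V22 | V19 \<Rightarrow> V23 | V20 \<Rightarrow> V19 | V21 \<Rightarrow> V18 | V22 \<Rightarrow> V21 | V23 \<Rightarrow> V20) | V13 \<Rightarrow> (case v of V0 \<Rightarrow> V13 | V1 \<Rightarrow> V12 | V2 \<Rightarrow> V16 | V3 \<Rightarrow> V17 | V4 \<Rightarrow> V14 | V5 \<Rightarrow> V15 | V6 \<Rightarrow> V3 | V7 \<Rightarrow> V2 | V8 \<Rightarrow> V5 | V9 \<Rightarrow> V4 | V10 \<Rightarrow> V0 | V11 \<Rightarrow> V1 | V12 \<Rightarrow> V22 |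 V13 \<Rightarrow> V23 | V14 \<Rightarrow> V19 | V15 \<Rightarrow> V18 | V16 \<Rightarrow> V21 | V17 \<Rightarrow> V20 | V18 \<Rightarrow> V8 | V19 \<Rightarrow> V9 | V20 \<Rightarrow> V6 | V21 \<Rightarrow> V7 | V22 \<Rightarrow> V11 | V23 \<Rightarrow> V10) | V14 \<Rightarrow> (case v of V0 \<Rightarrow> V14 | V1 \<Rightarrow> V15 | V2 \<Rightarrow> V12 | V3 \<Rightarrow> V13 | V4 \<Rightarrow> V17 | V5 \<Rightarrow> V16 | V6 \<Rightarrow> V8 | V7 \<Rightarrow> V9 | V8 \<Rightarrow> V6 | V9 \<Rightarrow> V7 | V10 \<Rightarrow> V11 | V11 \<Rightarrow> V10 | V12 \<Rightarrow> V2 | V13 \<Rightarrow> V3 | V14 \<Rightarrow> V0 | V15 \<Rightarrow> V1 | V16 \<Rightarrow> V5 | V17 \<Rightarrow> V4 | V18 \<Rightarrow> V23 | V19 \<Rightarrow> V22 | V20 \<Rightarrow> V21 | V21 \<Rightarrow> V20 | V22 \<Rightarrow> V19 | V23 \<Rightarrow> V18) | V15 \<Rightarrow> (case v of V0 \<Rightarrow> V15 | V1 \<Rightarrow> V14 | V2 \<Rightarrow> V17 | V3 \<Rightarrow> V16 | V4 \<Rightarrow> V12 | V5 \<Rightarrow> V13 | V6 \<Rightarrow> V9 | V7 \<Rightarrow> V8 | V8 \<Rightarrow> V11 | V9 \<Rightarrow> V10 | V10 \<Rightarrow> V6 | V11 \<Rightarrow> V7 | V12 \<Rightarrow> V23 |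 V13 \<Rightarrow> V22 | V14 \<Rightarrow> V21 | V15 \<Rightarrow> V20 | V16 \<Rightarrow> V19 | V17 \<Rightarrow> V18 | V18 \<Rightarrow> V2 | V19 \<Rightarrow> V3 | V20 \<Rightarrow> V0 | V21 \<Rightarrow> V1 | V22 \<Rightarrow> V5 | V23 \<Rightarrow> V4) | V16 \<Rightarrow> (case v of V0 \<Rightarrow> V16 | V1 \<Rightarrow> V17 | V2 \<Rightarrow> V13 | V3 \<Rightarrow> V12 | V4 \<Rightarrow> V15 | V5 \<Rightarrow> V14 | V6 \<Rightarrow> V22 | V7 \<Rightarrow> V23 | V8 \<Rightarrow> V19 | V9 \<Rightarrow> V18 | V10 \<Rightarrow> V21 | V11 \<Rightarrow> V20 | V12 \<Rightarrow> V3 | V13 \<Rightarrow> V2 | V14 \<Rightarrow> V5 | V15 \<Rightarrow> V4 | V16 \<Rightarrow> V0 | V17 \<Rightarrow> V1 | V18 \<Rightarrow> V9 | V19 \<Rightarrow> V8 | V20 \<Rightarrow> V11 | V21 \<Rightarrow> V10 | V22 \<Rightarrow> V6 | V23 \<Rightarrow> V7) | V17 \<Rightarrow> (case v of V0 \<Rightarrow> V17 | V1 \<Rightarrow> V16 | V2 \<Rightarrow> V15 | V3 \<Rightarrow> V14 | V4 \<Rightarrow> V13 | V5 \<Rightarrow> V12 | V6 \<Rightarrow> V23 | V7 \<Rightarrow> V22 | V8 \<Rightarrow> V21 | V9 \<Rightarrow> V20 | V10 \<Rightarrow> V19 | V11 \<Rightarrow> V18 | V12 \<Rightarrow> V9 |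 V13 \<Rightarrow> V8 | V14 \<Rightarrow> V11 | V15 \<Rightarrow> V10 | V16 \<Rightarrow> V6 | V17 \<Rightarrow> V7 | V18 \<Rightarrow> V3 | V19 \<Rightarrow> V2 | V20 \<Rightarrow> V5 | V21 \<Rightarrow> V4 | V22 \<Rightarrow> V0 | V23 \<Rightarrow> V1) | V18 \<Rightarrow> (case v of V0 \<Rightarrow> V18 | V1 \<Rightarrow> V19 | V2 \<Rightarrow> V20 | V3 \<Rightarrow> V21 | V4 \<Rightarrow> V22 | V5 \<Rightarrow> V23 | V6 \<Rightarrow> V4 | V7 \<Rightarrow> V5 | V8 \<Rightarrow> V1 | V9 \<Rightarrow> V0 | V10 \<Rightarrow> V3 | V11 \<Rightarrow> V2 | V12 \<Rightarrow> V10 | V13 \<Rightarrow> V11 | V14 \<Rightarrow> V7 | V15 \<Rightarrow> V6 | V16 \<Rightarrow> V9 | V17 \<Rightarrow> V8 | V18 \<Rightarrow> V16 | V19 \<Rightarrow> V17 | V20 \<Rightarrow> V13 | V21 \<Rightarrow> V12 | V22 \<Rightarrow> V15 | V23 \<Rightarrow> V14) | V19 \<Rightarrow> (case v of V0 \<Rightarrow> V19 | V1 \<Rightarrow> V18 | V2 \<Rightarrow> V22 | V3 \<Rightarrow> V23 | V4 \<Rightarrow> V20 | V5 \<Rightarrow> V21 | V6 \<Rightarrow> V5 | V7 \<Rightarrow> V4 | V8 \<Rightarrow> V3 | V9 \<Rightarrow> V2 | V10 \<Rightarrow> V1 | V11 \<Rightarrow> V0 | V12 \<Rightarrow> V16 |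 V13 \<Rightarrow> V17 | V14 \<Rightarrow> V13 | V15 \<Rightarrow> V12 | V16 \<Rightarrow> V15 | V17 \<Rightarrow> V14 | V18 \<Rightarrow> V10 | V19 \<Rightarrow> V11 | V20 \<Rightarrow> V7 | V21 \<Rightarrow> V6 | V22 \<Rightarrow> V9 | V23 \<Rightarrow> V8) | V20 \<Rightarrow> (case v of V0 \<Rightarrow> V20 | V1 \<Rightarrow> V21 | V2 \<Rightarrow> V18 | V3 \<Rightarrow> V19 | V4 \<Rightarrow> V23 | V5 \<Rightarrow> V22 | V6 \<Rightarrow> V10 | V7 \<Rightarrow> V11 | V8 \<Rightarrow> V7 | V9 \<Rightarrow> V6 | V10 \<Rightarrow> V9 | V11 \<Rightarrow> V8 | V12 \<Rightarrow> V4 | V13 \<Rightarrow> V5 | V14 \<Rightarrow> V1 | V15 \<Rightarrow> V0 | V16 \<Rightarrow> V3 | V17 \<Rightarrow> V2 | V18 \<Rightarrow> V17 | V19 \<Rightarrow> V16 | V20 \<Rightarrow> V15 | V21 \<Rightarrow> V14 | V22 \<Rightarrow> V13 | V23 \<Rightarrow> V12) | V21 \<Rightarrow> (case v of V0 \<Rightarrow> V21 | V1 \<Rightarrow> V20 | V2 \<Rightarrow> V23 | V3 \<Rightarrow> V22 | V4 \<Rightarrow> V18 | V5 \<Rightarrow> V19 | V6 \<Rightarrow> V11 | V7 \<Rightarrow> V10 | V8 \<Rightarrow> V9 | V9 \<Rightarrow> V8 | V10 \<Rightarrow> V7 | V11 \<Rightarrow> V6 | V12 \<Rightarrow> V17 |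 V13 \<Rightarrow> V16 | V14 \<Rightarrow> V15 | V15 \<Rightarrow> V14 | V16 \<Rightarrow> V13 | V17 \<Rightarrow> V12 | V18 \<Rightarrow> V4 | V19 \<Rightarrow> V5 | V20 \<Rightarrow> V1 | V21 \<Rightarrow> V0 | V22 \<Rightarrow> V3 | V23 \<Rightarrow> V2) | V22 \<Rightarrow> (case v of V0 \<Rightarrow> V22 | V1 \<Rightarrow> V23 | V2 \<Rightarrow> V19 | V3 \<Rightarrow> V18 | V4 \<Rightarrow> V21 | V5 \<Rightarrow> V20 | V6 \<Rightarrow> V16 | V7 \<Rightarrow> V17 | V8 \<Rightarrow> V13 | V9 \<Rightarrow> V12 | V10 \<Rightarrow> V15 | V11 \<Rightarrow> V14 | V12 \<Rightarrow> V5 | V13 \<Rightarrow> V4 | V14 \<Rightarrow> V3 | V15 \<Rightarrow> V2 | V16 \<Rightarrow> V1 | V17 \<Rightarrow> V0 | V18 \<Rightarrow> V11 | V19 \<Rightarrow> V10 | V20 \<Rightarrow> V9 | V21 \<Rightarrow> V8 | V22 \<Rightarrow> V7 | V23 \<Rightarrow> V6) | V23 \<Rightarrow> (case v of V0 \<Rightarrow> V23 | V1 \<Rightarrow> V22 | V2 \<Rightarrow> V21 | V3 \<Rightarrow> V20 | V4 \<Rightarrow> V19 | V5 \<Rightarrow> V18 | V6 \<Rightarrow> V17 | V7 \<Rightarrow> V16 | V8 \<Rightarrow> V15 | V9 \<Rightarrow> V14 | V10 \<Rightarrow> V13 | V11 \<Rightarrow> V12 | V12 \<Rightarrow> V11 |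 V13 \<Rightarrow> V10 | V14 \<Rightarrow> V9 | V15 \<Rightarrow> V8 | V16 \<Rightarrow> V7 | V17 \<Rightarrow> V6 | V18 \<Rightarrow> V5 | V19 \<Rightarrow> V4 | V20 \<Rightarrow> V3 | V21 \<Rightarrow> V2 | V22 \<Rightarrow> V1 | V23 \<Rightarrow> V0))"

lemma aut_self: "aut x x = V0"
  by (cases x) (simp_all add: aut_def)

lemma ainv_aut: "ainv x (aut x v) = v"
  by (cases x; cases v) (simp_all add: aut_def ainv_def)

lemma inj_aut: "inj (aut x)"
  by (rule injI) (metis ainv_aut)

lemma aut_edge: "\<forall>v\<in>set (nbr u). aut x v \<in> set (nbr (aut x u))"
  by (cases x; cases u) (simp_all add: aut_def)

lemma ainv_edge: "\<forall>v\<in>set (nbr u). ainv x v \<in> set (nbr (ainv x u))"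
  by (cases x; cases u) (simp_all add: ainv_def)

lemma aut_adj: "adjv (aut x u) (aut x v) = adjv u v"
proof
  assume "adjv (aut x u) (aut x v)"
  then have "adjv (ainv x (aut x u)) (ainv x (aut x v))" using ainv_edge by (auto simp: adjv_def)
  then show "adjv u v" by (simp add: ainv_aut)
next
  assume "adjv u v"
  then show "adjv (aut x u) (aut x v)" using aut_edge by (auto simp: adjv_def)
qed

lemma surj_aut: "surj (aut x)"
  by (rule finite_UNIV_inj_surj) (simp_all add: inj_aut)

lemma main_vx:
  fixes F :: "vx set"
  assumes cF: "card F \<le> b" and rk: "r + k = 24" and k2: "2 \<le> k"
    and ev: "\<not> run 200 (Xp (upd V0 InS S0) (nbr V0) k b r (Suc 0) (Suc 0))"
  shows "card (comps (UNIV - F)) < k"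
proof (rule ccontr)
  assume "\<not> card (comps (UNIV - F)) < k"
  then have kc: "k \<le> card (comps (UNIV - F))" by simp
  let ?cs0 = "comps (UNIV - F)"
  have csne: "?cs0 \<noteq> {}" using kc k2 by auto
  obtain C0 where C0: "C0 \<in> ?cs0" and C0min: "\<forall>D\<in>?cs0. card C0 \<le> card D"
  proof -
    have "Min (card ` ?cs0) \<in> card ` ?cs0" using csne by (intro Min_in) auto
    then obtain C where "C \<in> ?cs0" "card C = Min (card ` ?cs0)" by auto
    moreover have "\<forall>D\<in>?cs0. Min (card ` ?cs0) \<le> card D" by auto
    ultimately show ?thesis using that by auto
  qed
  obtain x where x: "x \<in> C0" using G.comp_ne[OF C0] by auto
  define h where "h = aut x"
  have injh: "inj h" unfolding h_def by (rule inj_aut)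
  have homh: "\<And>u v. adjv (h u) (h v) = adjv u v" unfolding h_def by (rule aut_adj)
  have surjh: "range h = UNIV" unfolding h_def using surj_aut by simp
  define F' where "F' = h ` F"
  have img: "h ` (UNIV - F) = UNIV - F'"
    unfolding F'_def using image_set_diff[OF injh, of UNIV F] surjh by simp
  define cs where "cs = image h ` ?cs0"
  define C where "C = h ` C0"
  have cseq: "comps (UNIV - F') = cs"
    unfolding cs_def using comps_image[of h adjv adjv "UNIV - F", OF injh homh] img by simp
  have ccs: "card cs = card ?cs0"
    unfolding cs_def[symmetric, unfolded cs_def] using card_comps_image[of h adjv adjv "UNIV - F", OF injh homh] img cseq
    by (simp add: cs_def)
  have cardh: "card (h ` D) = card D" for D using injh by (simp add: card_image inj_on_subset)
  let ?\<sigma> = "upd V0 InS S0"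
  have W: "Wof ?\<sigma> = UNIV" by (auto simp: Wof_def get_upd get_S0)
  have S: "Sof ?\<sigma> = {V0}" by (auto simp: Sof_def get_upd get_S0)
  have Fs: "Fof ?\<sigma> = {}" by (auto simp: Fof_def get_upd get_S0)
  have L: "Lof ?\<sigma> = {}" by (auto simp: Lof_def get_upd get_S0)
  have "wEx ?\<sigma> (nbr V0) k b r (Suc 0) (Suc 0) F' cs C b"
    unfolding wEx_def W S Fs L
  proof (intro conjI)
    show "card F' \<le> b" using cF cardh F'_def by simp
    show "cs \<subseteq> comps (UNIV - F')" using cseq by simp
    show "k \<le> card cs" using kc ccs by simp
    show "2 \<le> k" by (rule k2)
    show "\<forall>D\<in>cs. Suc 0 \<le> card D"
    proof
      fix D assume "D \<in> cs"
      then have "D \<in> comps (UNIV - F')" using cseq by simp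
      then have "D \<noteq> {}" by (rule G.comp_ne)
      then show "Suc 0 \<le> card D" by (simp add: Suc_le_eq card_gt_0_iff)
    qed
    show "C \<in> cs" unfolding C_def cs_def using C0 by simp
    show "\<forall>D\<in>cs. card C \<le> card D" unfolding C_def cs_def using C0min cardh by auto
    show "{V0} \<subseteq> C" unfolding C_def h_def using x aut_self by (metis empty_subsetI image_eqI insert_subset)
    show "r + k * Suc 0 + card {} = card (UNIV :: vx set)" using rk card_UNIV_vx by simp
    show "\<forall>y\<in>set (nbr V0). \<exists>s\<in>{V0}. adjv s y" by (simp add: adjv_def)
    show "\<forall>s\<in>{V0}. \<forall>v\<in>UNIV. adjv s v \<longrightarrow> v \<in> {V0} \<or> v \<in> {} \<or> v \<in> set (nbr V0)"
      by (simp add: adjv_def)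
  qed auto
  then have "run 200 (Xp ?\<sigma> (nbr V0) k b r (Suc 0) (Suc 0))"
    using sound[of 200] IHs_E by blast
  then show False using ev by simp
qed

lemma vx4: "card (F :: vx set) < 10 \<Longrightarrow> card (comps (UNIV - F)) < 4"
proof -
  assume a: "card F < 10"
  have "card (comps (UNIV - F)) < (Suc (Suc (Suc (Suc 0))))"
  proof (rule main_vx)
    show "card F \<le> (Suc (Suc (Suc (Suc (Suc (Suc (Suc (Suc (Suc 0)))))))))" using a by simp
    show "(Suc (Suc (Suc (Suc (Suc (Suc (Suc (Suc (Suc (Suc (Suc (Suc (Suc (Suc (Suc (Suc (Suc (Suc (Suc (Suc 0)))))))))))))))))))) + (Suc (Suc (Suc (Suc 0)))) = 24" by simp
    show "2 \<le> (Suc (Suc (Suc (Suc 0))))" by simp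
    show "\<not> run 200 (Xp (upd V0 InS S0) (nbr V0) (Suc (Suc (Suc (Suc 0)))) (Suc (Suc (Suc (Suc (Suc (Suc (Suc (Suc (Suc 0))))))))) (Suc (Suc (Suc (Suc (Suc (Suc (Suc (Suc (Suc (Suc (Suc (Suc (Suc (Suc (Suc (Suc (Suc (Suc (Suc (Suc 0)))))))))))))))))))) (Suc 0) (Suc 0))"
      using eval4 by simp
  qed
  then show ?thesis by simp
qed

lemma vx5: "card (F :: vx set) < 12 \<Longrightarrow> card (comps (UNIV - F)) < 5"
proof -
  assume a: "card F < 12"
  have "card (comps (UNIV - F)) < (Suc (Suc (Suc (Suc (Suc 0)))))"
  proof (rule main_vx)
    show "card F \<le> (Suc (Suc (Suc (Suc (Suc (Suc (Suc (Suc (Suc (Suc (Suc 0)))))))))))" using a by simp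
    show "(Suc (Suc (Suc (Suc (Suc (Suc (Suc (Suc (Suc (Suc (Suc (Suc (Suc (Suc (Suc (Suc (Suc (Suc (Suc 0))))))))))))))))))) + (Suc (Suc (Suc (Suc (Suc 0))))) = 24" by simp
    show "2 \<le> (Suc (Suc (Suc (Suc (Suc 0)))))" by simp
    show "\<not> run 200 (Xp (upd V0 InS S0) (nbr V0) (Suc (Suc (Suc (Suc (Suc 0))))) (Suc (Suc (Suc (Suc (Suc (Suc (Suc (Suc (Suc (Suc (Suc 0))))))))))) (Suc (Suc (Suc (Suc (Suc (Suc (Suc (Suc (Suc (Suc (Suc (Suc (Suc (Suc (Suc (Suc (Suc (Suc (Suc 0))))))))))))))))))) (Suc 0) (Suc 0))"
      using eval5 by simp
  qed
  then show ?thesis by simp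
qed

section \<open>Transfer to the split-star\<close>

fun pl :: "vx \<Rightarrow> nat list" where
"pl V0 = [1,2,3,4]"
| "pl V1 = [1,2,4,3]"
| "pl V2 = [1,3,2,4]"
| "pl V3 = [1,3,4,2]"
| "pl V4 = [1,4,2,3]"
| "pl V5 = [1,4,3,2]"
| "pl V6 = [2,1,3,4]"
| "pl V7 = [2,1,4,3]"
| "pl V8 = [2,3,1,4]"
| "pl V9 = [2,3,4,1]"
| "pl V10 = [2,4,1,3]"
| "pl V11 = [2,4,3,1]"
| "pl V12 = [3,1,2,4]"
| "pl V13 = [3,1,4,2]"
| "pl V14 = [3,2,1,4]"
| "pl V15 = [3,2,4,1]"
| "pl V16 = [3,4,1,2]"
| "pl V17 = [3,4,2,1]"
| "pl V18 = [4,1,2,3]"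
| "pl V19 = [4,1,3,2]"
| "pl V20 = [4,2,1,3]"
| "pl V21 = [4,2,3,1]"
| "pl V22 = [4,3,1,2]"
| "pl V23 = [4,3,2,1]"

lemma inj_pl: "inj pl"
  by (rule injI) (case_tac x; case_tac y; simp)

lemma len4: "length (p :: nat list) = 4 \<Longrightarrow> \<exists>a b c d. p = [a, b, c, d]"
proof -
  assume "length p = 4"
  moreover have "(4::nat) = Suc (Suc (Suc (Suc 0)))" by simp
  ultimately have "length p = Suc (Suc (Suc (Suc 0)))" by simp
  then show ?thesis by (auto simp: length_Suc_conv)
qed

lemma perm4: "a \<in> {1,2,3,4} \<Longrightarrow> b \<in> {1,2,3,4} \<Longrightarrow> c \<in> {1,2,3,4} \<Longrightarrow> d \<in> {1,2,3,4} \<Longrightarrow>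
  distinct [a, b, c, d] \<Longrightarrow> [a, b, c, (d::nat)] \<in> set (map pl allv)"
  by (elim insertE emptyE; simp add: allv_def)

lemma S42_V_eq: "S42_V = range pl"
proof
  show "range pl \<subseteq> S42_V"
  proof
    fix p assume "p \<in> range pl"
    then obtain v where "p = pl v" by auto
    then show "p \<in> S42_V" by (cases v) (auto simp: S42_V_def)
  qed
  show "S42_V \<subseteq> range pl"
  proof
    fix p assume "p \<in> S42_V"
    then have p: "length p = 4" "distinct p" "set p = {1,2,3,4}" by (auto simp: S42_V_def)
    then obtain a b c d where abcd: "p = [a, b, c, d]" using len4 by blast
    have "a \<in> {1,2,3,4}" "b \<in> {1,2,3,4}" "c \<in> {1,2,3,4}" "d \<in> {1,2,3,4}"
      using p(3) abcd by auto
    then have "p \<in> set (map pl allv)" using perm4 p(2) abcd by simp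
    then show "p \<in> range pl" by auto
  qed
qed

lemma card_S42_V: "card S42_V = 24"
  unfolding S42_V_eq using card_image[OF inj_pl] card_UNIV_vx by simp

lemma pl_nbr: "S42_E (pl u) q \<longleftrightarrow> q \<in> pl ` set (nbr u)"
  by (cases u) (auto simp: S42_E_def g12_def gplus_def gminus_def)

lemma pl_hom: "S42_E (pl u) (pl v) = adjv u v"
  unfolding pl_nbr adjv_def using inj_pl by (auto simp: inj_eq)

lemma transfer:
  assumes "F \<subseteq> S42_V"
  shows "card (components (S42_V - F) S42_E) = card (comps (UNIV - pl -` F)) \<and> card (pl -` F) = card F"
proof -
  let ?G = "pl -` F"
  have FG: "F = pl ` ?G" using assms S42_V_eq by auto
  have "S42_V - F = pl ` (UNIV - ?G)"
    using FG S42_V_eq image_set_diff[OF inj_pl, of UNIV ?G] by simp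
  then have "card (components (S42_V - F) S42_E) = card (comps (UNIV - ?G))"
    using card_comps_image[of pl S42_E adjv "UNIV - ?G", OF inj_pl pl_hom] by simp
  moreover have "card ?G = card F" using FG card_image[of pl ?G] inj_pl by (simp add: inj_on_subset)
  ultimately show ?thesis by simp
qed

lemma gc_bound:
  assumes H: "\<And>G :: vx set. card G < m \<Longrightarrow> card (comps (UNIV - G)) < l"
    and ml: "m + l \<le> 25" and l1: "1 \<le> l"
  shows "m \<le> gen_conn l S42_V S42_E"
  unfolding gen_conn_def
proof (rule cInf_greatest)
  show "{card F |F. F \<subseteq> S42_V \<and> (2 \<le> card (components (S42_V - F) S42_E) \<and> l \<le> card (components (S42_V - F) S42_E)
      \<or> card (S42_V - F) < l)} \<noteq> {}"
    using l1 by auto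
next
  fix c assume "c \<in> {card F |F. F \<subseteq> S42_V \<and> (2 \<le> card (components (S42_V - F) S42_E) \<and> l \<le> card (components (S42_V - F) S42_E)
      \<or> card (S42_V - F) < l)}"
  then obtain F where F: "c = card F" "F \<subseteq> S42_V"
    and cond: "(2 \<le> card (components (S42_V - F) S42_E) \<and> l \<le> card (components (S42_V - F) S42_E)) \<or> card (S42_V - F) < l"
    by blast
  show "m \<le> c"
  proof (rule ccontr)
    assume "\<not> m \<le> c"
    then have cF: "card F < m" using F by simp
    have fin: "finite S42_V" unfolding S42_V_eq by simp
    have "card (S42_V - F) = 24 - card F" using card_Diff_subset[OF finite_subset[OF F(2) fin] F(2)] card_S42_V by simp
    then have c1: "\<not> card (S42_V - F) < l" using cF ml by simp
    have tr: "card (components (S42_V - F) S42_E) = card (comps (UNIV - pl -` F))" "card (pl -` F) = card F"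
      using transfer[OF F(2)] by auto
    have "card (comps (UNIV - pl -` F)) < l" using H cF tr(2) by simp
    then show False using cond c1 tr(1) by simp
  qed
qed

theorem lemma19:
  shows "gen_conn 4 S42_V S42_E \<ge> 10 \<and> gen_conn 5 S42_V S42_E \<ge> 12"
proof
  show "gen_conn 4 S42_V S42_E \<ge> 10" by (rule gc_bound) (auto intro: vx4)
  show "gen_conn 5 S42_V S42_E \<ge> 12" by (rule gc_bound) (auto intro: vx5)
qed

end
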